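(* Let $p$ be a prime. Define $$\Phi:\mathbb{Z}_p[X_0,X_1;Y_0,Y_1]_{22}\to\mathbb{Z}_p[X_0,X_1]_2\times\mathbb{Z}_p[X_0,X_1]_4,\qquad F_0Y_0^2+F_1Y_0Y_1+F_2Y_1^2\mapsto(F_1,-F_0F_2),$$ where $F_0,F_1,F_2\in\mathbb{Z}_p[X_0,X_1]_2$, and let $\Phi_p$ be the analogous map on forms with coefficients in $\mathbb{F}_p$. Let $\overline F\in\mathbb{F}_p[X_0,X_1;Y_0,Y_1]_{22}$ be either (i) $\overline F=f(X_0Y_0,X_0Y_1+X_1Y_0)$ with $f$ an irreducible binary quadratic form over $\mathbb{F}_p$, or (ii) $\overline F=(X_0Y_1-X_1Y_0)^2$. Then $\Phi$ restricts to a measure-preserving map $$\{F\in\mathbb{Z}_p[X_0,X_1;Y_0,Y_1]_{22}:F\equiv\overline F\ (\mathrm{mod}\ p)\}\to\{G\in\mathbb{Z}_p[X_0,X_1]_2\times\mathbb{Z}_p[X_0,X_1]_4:G\equiv\Phi_p(\overline F)\ (\mathrm{mod}\ p)\}.$$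
   Context: $\mathbb{Z}_p[X_0,X_1]_d$ denotes binary forms of degree $d$ over $\mathbb{Z}_p$, and $\mathbb{Z}_p[X_0,X_1;Y_0,Y_1]_{22}$ denotes forms homogeneous of degree 2 in $(X_0,X_1)$ and of degree 2 in $(Y_0,Y_1)$; these are identified with $\mathbb{Z}_p^3$, $\mathbb{Z}_p^5$ and $\mathbb{Z}_p^9$ via coefficients and carry Haar measure, and the two residue classes above are given the (normalized) restrictions of these Haar measures. *)

theory Defs
  imports "HOL-Probability.Probability"
begin

text \<open>A p-adic integer is represented by its compatible system of residues:
  x n \<in> {0..<p^n} is the residue of x modulo p^n, and x (Suc n) mod p^n = x n.\<close>

definition Zp :: "nat \<Rightarrow> (nat \<Rightarrow> int) set" where
  "Zp p = {x. \<forall>n. 0 \<le> x n \<and> x n < int p ^ n \<and> x (Suc n) mod (int p ^ n) = x n}"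

definition from_digits :: "nat \<Rightarrow> (nat \<Rightarrow> int) \<Rightarrow> (nat \<Rightarrow> int)" where
  "from_digits p d = (\<lambda>n. \<Sum>i<n. d i * int p ^ i)"

text \<open>Normalised Haar measure on Z_p: the image of the product of uniform
  measures on the digits {0..p-1}.  Ambient measurable space: nat \<Rightarrow> int with the
  product of discrete sigma-algebras.\<close>
definition haar_Zp :: "nat \<Rightarrow> (nat \<Rightarrow> int) measure" where
  "haar_Zp p = distr (PiM UNIV (\<lambda>_. uniform_count_measure {0..<int p}))
                     (PiM UNIV (\<lambda>_. count_space UNIV)) (from_digits p)"

definition haar_Zp_vec :: "nat \<Rightarrow> nat \<Rightarrow> (nat \<Rightarrow> nat \<Rightarrow> int) measure" where
  "haar_Zp_vec p m = PiM {..<m} (\<lambda>_. haar_Zp p)"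

definition residue_class :: "nat \<Rightarrow> nat \<Rightarrow> (nat \<Rightarrow> int) \<Rightarrow> (nat \<Rightarrow> nat \<Rightarrow> int) set" where
  "residue_class p m c = {x \<in> PiE {..<m} (\<lambda>_. Zp p). \<forall>j<m. x j 1 = c j mod int p}"

definition measure_preserving_map :: "'a measure \<Rightarrow> 'b measure \<Rightarrow> ('a \<Rightarrow> 'b) \<Rightarrow> bool" where
  "measure_preserving_map M N f \<longleftrightarrow> f \<in> measurable M N \<and> distr M N f = N"

text \<open>A form F = F0 Y0^2 + F1 Y0 Y1 + F2 Y1^2 of bidegree (2,2)
  with F_k = c(3k) X0^2 + c(3k+1) X0 X1 + c(3k+2) X1^2 is the vector c 0 .. c 8.
  A pair (G2, G4) of binary forms of degrees 2 and 4 is the vector d 0 .. d 7 with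
  G2 = d0 X0^2 + d1 X0 X1 + d2 X1^2 and G4 = d3 X0^4 + d4 X0^3 X1 + ... + d7 X1^4.
  phi_poly is Phi: F \<mapsto> (F1, - F0 F2), as integer polynomials in the coefficients.\<close>
definition phi_poly :: "(nat \<Rightarrow> int) \<Rightarrow> nat \<Rightarrow> int" where
  "phi_poly c i =
     (if i = 0 then c 3 else if i = 1 then c 4 else if i = 2 then c 5
      else if i = 3 then - (c 0 * c 6)
      else if i = 4 then - (c 0 * c 7 + c 1 * c 6)
      else if i = 5 then - (c 0 * c 8 + c 1 * c 7 + c 2 * c 6)
      else if i = 6 then - (c 1 * c 8 + c 2 * c 7)
      else if i = 7 then - (c 2 * c 8) else 0)"

definition Phi :: "nat \<Rightarrow> (nat \<Rightarrow> nat \<Rightarrow> int) \<Rightarrow> (nat \<Rightarrow> nat \<Rightarrow> int)" where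
  "Phi p x = (\<lambda>i\<in>{..<8}. \<lambda>n. phi_poly (\<lambda>j. x j n) i mod (int p ^ n))"

definition irreducible_bqf_mod :: "nat \<Rightarrow> int \<Rightarrow> int \<Rightarrow> int \<Rightarrow> bool" where
  "irreducible_bqf_mod p a b c \<longleftrightarrow>
     \<not> (\<exists>r s t u :: int. a mod int p = (r * t) mod int p \<and> b mod int p = (r * u + s * t) mod int p
                        \<and> c mod int p = (s * u) mod int p)"

text \<open>f(X0 Y0, X0 Y1 + X1 Y0) for f(U,V) = a U^2 + b U V + c V^2:
  F0 = a X0^2 + b X0 X1 + c X1^2, F1 = b X0^2 + 2c X0 X1, F2 = c X0^2.\<close>
definition Fbar_i :: "int \<Rightarrow> int \<Rightarrow> int \<Rightarrow> nat \<Rightarrow> int" where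
  "Fbar_i a b c = (\<lambda>j. if j = 0 then a else if j = 1 then b else if j = 2 then c
                      else if j = 3 then b else if j = 4 then 2 * c
                      else if j = 6 then c else 0)"

text \<open>(X0 Y1 - X1 Y0)^2: F0 = X1^2, F1 = -2 X0 X1, F2 = X0^2.\<close>
definition Fbar_ii :: "nat \<Rightarrow> int" where
  "Fbar_ii = (\<lambda>j. if j = 2 then 1 else if j = 4 then -2 else if j = 6 then 1 else 0)"

end

theory Submission
  imports Defs "HOL-Number_Theory.Cong" "HOL-Computational_Algebra.Primes"
begin

definition Bl :: "(nat \<Rightarrow> int) \<Rightarrow> (nat \<Rightarrow> int) \<Rightarrow> nat \<Rightarrow> int" where
  "Bl c t i = phi_poly (\<lambda>j. c j + t j) i - phi_poly c i - phi_poly t i"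

definition Dlin :: "(nat \<Rightarrow> int) \<Rightarrow> (nat \<Rightarrow> int) \<Rightarrow> nat \<Rightarrow> int" where
  "Dlin c t i = (if i < 3 then t (i + 3) else Bl c t i)"

lemma phi_poly_expand:
  "phi_poly (\<lambda>j. c j + q * t j) i = phi_poly c i + q * Dlin c t i + (if i < 3 then 0 else q^2 * phi_poly t i)"
  unfolding Dlin_def Bl_def phi_poly_def by (simp add: algebra_simps power2_eq_square)

lemma Bl_lin: "Bl (\<lambda>j. c j + m * k j) t i = Bl c t i + m * Bl k t i"
  unfolding Bl_def phi_poly_def by (simp add: algebra_simps)

lemma Dlin_cong:
  assumes "\<And>j. [c j = c' j] (mod m)"
  shows "[Dlin c t i = Dlin c' t i] (mod m)"
proof -
  have "\<And>j. \<exists>k. c j = c' j + m * k"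
    using assms by (metis cong_iff_lin cong_sym)
  then obtain k where k: "\<And>j. c j = c' j + m * k j" by metis
  have "c = (\<lambda>j. c' j + m * k j)" using k by auto
  then have "Bl c t i = Bl c' t i + m * Bl k t i" using Bl_lin by simp
  then show ?thesis unfolding Dlin_def cong_def
    by simp
qed

lemma phi_poly_cong:
  assumes "\<And>j. [a j = b j] (mod m)"
  shows "[phi_poly a i = phi_poly b i] (mod m)"
  using assms unfolding phi_poly_def
  by (auto intro!: cong_add cong_diff cong_mult cong_minus_minus_iff[THEN iffD2])


definition classv :: "nat \<Rightarrow> nat \<Rightarrow> nat \<Rightarrow> (nat \<Rightarrow> int) \<Rightarrow> (nat \<Rightarrow> int) set" where
  "classv p m N c = {w \<in> PiE {..<m} (\<lambda>_. {0..<int p ^ N}). \<forall>j<m. w j mod int p = c j mod int p}"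

definition phiN :: "nat \<Rightarrow> nat \<Rightarrow> (nat \<Rightarrow> int) \<Rightarrow> nat \<Rightarrow> int" where
  "phiN p N w = (\<lambda>i\<in>{..<8}. phi_poly w i mod (int p ^ N))"

definition fiber :: "nat \<Rightarrow> nat \<Rightarrow> (nat \<Rightarrow> int) \<Rightarrow> (nat \<Rightarrow> int) \<Rightarrow> (nat \<Rightarrow> int) set" where
  "fiber p N c z = {w \<in> classv p 9 N c. phiN p N w = z}"

definition Lin :: "nat \<Rightarrow> (nat \<Rightarrow> int) \<Rightarrow> (nat \<Rightarrow> int) \<Rightarrow> (nat \<Rightarrow> int) set" where
  "Lin p c e = {t \<in> PiE {..<9} (\<lambda>_. {0..<int p}). \<forall>i<8. [Dlin c t i = e i] (mod int p)}"

lemma phi_poly_restrict: "phi_poly (restrict f {..<9}) = phi_poly f"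
  unfolding phi_poly_def by (auto simp: fun_eq_iff)

lemma Dlin_restrict: "Dlin (restrict f {..<9}) = Dlin f"
  unfolding Dlin_def Bl_def phi_poly_def by (auto simp: fun_eq_iff)

lemma finite_classv: "finite (classv p m N c)"
  unfolding classv_def by (rule finite_subset[OF _ finite_PiE[of "{..<m}" "\<lambda>_. {0..<int p ^ N}"]]) auto

lemma cong_cancel_int: "(q::int) \<noteq> 0 \<Longrightarrow> [q*a = q*b] (mod q*m) \<longleftrightarrow> [a = b] (mod m)"
  unfolding cong_def by (simp add: mod_mult_mult1)

lemma fiber_base:
  assumes p: "p > 1" and z: "z \<in> classv p 8 1 (phi_poly c)"
  shows "fiber p 1 c z = {restrict (\<lambda>j. c j mod int p) {..<9}}"
proof -
  have zi: "z i = phi_poly c i mod int p" if "i < 8" for i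
    using z that unfolding classv_def by (auto simp: PiE_iff)
  have zext: "z i = undefined" if "i \<ge> 8" for i
    using z that unfolding classv_def by (auto simp: PiE_iff extensional_def)
  have ph: "phiN p 1 (restrict (\<lambda>j. c j mod int p) {..<9}) = z"
  proof
    fix i show "phiN p 1 (restrict (\<lambda>j. c j mod int p) {..<9}) i = z i"
    proof (cases "i < 8")
      case True
      have "[phi_poly (\<lambda>j. c j mod int p) i = phi_poly c i] (mod int p)"
        by (rule phi_poly_cong) (simp add: cong_def)
      then show ?thesis using True zi unfolding phiN_def phi_poly_restrict by (simp add: cong_def)
    next
      case False then show ?thesis using zext unfolding phiN_def by simp
    qed
  qed
  show ?thesis
  proof (intro equalityI subsetI)
    fix w assume w: "w \<in> fiber p 1 c z"
    show "w \<in> {restrict (\<lambda>j. c j mod int p) {..<9}}"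
    proof -
      have "w = restrict (\<lambda>j. c j mod int p) {..<9}"
      proof
        fix j show "w j = restrict (\<lambda>j. c j mod int p) {..<9} j"
          using w unfolding fiber_def classv_def
          by (cases "j < 9") (auto simp: PiE_iff extensional_def)
      qed
      then show ?thesis by simp
    qed
  next
    fix w assume "w \<in> {restrict (\<lambda>j. c j mod int p) {..<9}}"
    then show "w \<in> fiber p 1 c z" using ph p unfolding fiber_def classv_def
      by (auto simp: PiE_iff)
  qed
qed


lemma lift_mem:
  assumes p: "p > 1" and N: "N \<ge> 1" and q: "q = int p ^ N"
    and w: "w \<in> fiber p N c z" and z': "z' \<in> classv p 8 (Suc N) (phi_poly c)"
    and z: "z = restrict (\<lambda>i. z' i mod q) {..<8}"
    and t: "t \<in> PiE {..<9} (\<lambda>_. {0..<int p})"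
  shows "restrict (\<lambda>j. w j + q * t j) {..<9} \<in> fiber p (Suc N) c z'
     \<longleftrightarrow> t \<in> Lin p c (\<lambda>i. (z' i - phi_poly w i) div q)"
proof -
  define w' where "w' = restrict (\<lambda>j. w j + q * t j) {..<9}"
  have qpos: "q > 0" using p q by simp
  have pq: "int p ^ Suc N = int p * q" using q by simp
  have pdq: "int p dvd q" using N q by (simp add: dvd_power)
  have wr: "0 \<le> w j \<and> w j < q" "w j mod int p = c j mod int p" if "j < 9" for j
    using w that q unfolding fiber_def classv_def by (auto simp: PiE_iff)
  have tr: "0 \<le> t j \<and> t j < int p" if "j < 9" for j
    using t that by (auto simp: PiE_iff)
  have w'range: "0 \<le> w' j \<and> w' j < int p ^ Suc N" if "j < 9" for j
  proof -
    have "q * t j \<le> q * (int p - 1)" using tr[OF that] qpos by (intro mult_left_mono) auto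
    then show ?thesis using wr(1)[OF that] tr[OF that] qpos pq that unfolding w'_def
      by (auto simp: algebra_simps)
  qed
  have w'mod: "w' j mod int p = c j mod int p" if "j < 9" for j
  proof -
    have "(w j + q * t j) mod int p = w j mod int p"
      using pdq by (metis dvd_mult2 mod_mult_self2 dvd_def mult.commute mult.left_commute)
    then show ?thesis using wr(2)[OF that] that unfolding w'_def by simp
  qed
  have w'cl: "w' \<in> classv p 9 (Suc N) c"
    unfolding classv_def using w'range w'mod by (auto simp: PiE_iff w'_def)
  have zr: "0 \<le> z' i \<and> z' i < int p * q" if "i < 8" for i
    using z' that pq unfolding classv_def by (auto simp: PiE_iff)
  have zext: "z' i = undefined" if "i \<ge> 8" for i
    using z' that unfolding classv_def by (auto simp: PiE_iff extensional_def)
  have phw: "phi_poly w i mod q = z' i mod q" if "i < 8" for i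
  proof -
    have "phiN p N w i = z i" using w unfolding fiber_def by simp
    then show ?thesis using that q z unfolding phiN_def by simp
  qed
  define e where "e = (\<lambda>i. (z' i - phi_poly w i) div q)"
  have ze: "z' i = phi_poly w i + q * e i" if "i < 8" for i
  proof -
    have "q dvd (z' i - phi_poly w i)" using phw[OF that] by (metis mod_eq_dvd_iff)
    then show ?thesis unfolding e_def by auto
  qed
  have key: "phi_poly w' i mod (int p * q) = z' i \<longleftrightarrow> [Dlin c t i = e i] (mod int p)"
    if i: "i < 8" for i
  proof -
    define X where "X = (if i < 3 then 0 else q^2 * phi_poly t i)"
    have Xd: "(int p * q) dvd X" unfolding X_def power2_eq_square using pdq
      by (auto intro: mult_dvd_mono)
    have "phi_poly w' i = phi_poly w i + q * Dlin w t i + X"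
      unfolding w'_def phi_poly_restrict phi_poly_expand X_def by simp
    then have "phi_poly w' i mod (int p * q) = z' i \<longleftrightarrow>
        [phi_poly w i + q * Dlin w t i + X = phi_poly w i + q * e i] (mod int p * q)"
      using zr[OF i] ze[OF i] by (simp add: cong_def)
    also have "\<dots> \<longleftrightarrow> [q * Dlin w t i + X = q * e i] (mod int p * q)"
      by (simp add: add.assoc cong_add_lcancel)
    also have "\<dots> \<longleftrightarrow> [q * Dlin w t i = q * e i] (mod int p * q)"
    proof -
      have "[X = 0] (mod int p * q)" using Xd by (simp add: cong_0_iff)
      then have "[q * Dlin w t i + X = q * Dlin w t i + 0] (mod int p * q)"
        by (intro cong_add) auto
      then show ?thesis by (metis add_0_right cong_sym cong_trans)
    qed
    also have "\<dots> \<longleftrightarrow> [Dlin w t i = e i] (mod int p)"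
      using cong_cancel_int[of q "Dlin w t i" "e i" "int p"] qpos by (simp add: mult.commute)
    also have "\<dots> \<longleftrightarrow> [Dlin c t i = e i] (mod int p)"
    proof -
      have "[Dlin (restrict w {..<9}) t i = Dlin (restrict c {..<9}) t i] (mod int p)"
      proof (rule Dlin_cong)
        fix j show "[restrict w {..<9} j = restrict c {..<9} j] (mod int p)"
          using wr(2) by (cases "j < 9") (simp_all add: cong_def)
      qed
      then have "[Dlin w t i = Dlin c t i] (mod int p)" by (simp add: Dlin_restrict)
      then show ?thesis by (meson cong_sym cong_trans)
    qed
    finally show ?thesis .
  qed
  have "w' \<in> fiber p (Suc N) c z' \<longleftrightarrow> phiN p (Suc N) w' = z'"
    using w'cl unfolding fiber_def by simp
  also have "\<dots> \<longleftrightarrow> (\<forall>i<8. phi_poly w' i mod (int p * q) = z' i)"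
    unfolding phiN_def pq using zext by (auto simp: fun_eq_iff)
  also have "\<dots> \<longleftrightarrow> t \<in> Lin p c e"
    using key t unfolding Lin_def by auto
  finally show ?thesis unfolding w'_def e_def .
qed


lemma classv_down:
  assumes p: "p > 1" and N: "N \<ge> 1" and q: "q = int p ^ N"
    and z': "z' \<in> classv p m (Suc N) d"
  shows "restrict (\<lambda>i. z' i mod q) {..<m} \<in> classv p m N d"
proof -
  have pdq: "int p dvd q" using N q by (simp add: dvd_power)
  have qpos: "q > 0" using p q by simp
  have "z' i mod q mod int p = d i mod int p" if "i < m" for i
    using z' that pdq unfolding classv_def by (auto simp: mod_mod_cancel)
  then show ?thesis using qpos q unfolding classv_def by (auto simp: PiE_iff)
qed


lemma fiber_step:
  assumes p: "p > 1" and N: "N \<ge> 1" and q: "q = int p ^ N"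
    and z': "z' \<in> classv p 8 (Suc N) (phi_poly c)"
    and linc: "\<And>e. card (Lin p c e) = p"
  shows "card (fiber p (Suc N) c z') = card (fiber p N c (restrict (\<lambda>i. z' i mod q) {..<8})) * p"
proof -
  define z where "z = restrict (\<lambda>i. z' i mod q) {..<8}"
  define F where "F = fiber p N c z"
  define Lift where "Lift w = {w' \<in> fiber p (Suc N) c z'. \<forall>j<9. w' j mod q = w j}" for w
  define e where "e w = (\<lambda>i. (z' i - phi_poly w i) div q)" for w
  define L where "L w t = restrict (\<lambda>j. w j + q * t j) {..<9}" for w t :: "nat \<Rightarrow> int"
  have qpos: "q > 0" using p q by simp
  have pdq: "int p dvd q" using N q by (simp add: dvd_power)
  have pq: "int p ^ Suc N = int p * q" using q by simp
  have finF: "finite F" unfolding F_def fiber_def using finite_classv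
    by (rule finite_subset[rotated]) auto
  have fin2: "finite (fiber p (Suc N) c z')" unfolding fiber_def using finite_classv
    by (rule finite_subset[rotated]) auto
  have cover: "fiber p (Suc N) c z' = (\<Union>w\<in>F. Lift w)"
  proof (intro equalityI subsetI)
    fix w' assume w': "w' \<in> fiber p (Suc N) c z'"
    define w where "w = restrict (\<lambda>j. w' j mod q) {..<9}"
    have wcl: "w \<in> classv p 9 N c"
      using classv_down[OF p N q, of w' 9 c] w' unfolding fiber_def w_def by simp
    have "phiN p N w = z"
    proof
      fix i show "phiN p N w i = z i"
      proof (cases "i < 8")
        case True
        have "[phi_poly (\<lambda>j. w' j mod q) i = phi_poly w' i] (mod q)"
          by (rule phi_poly_cong) (simp add: cong_def)
        then have "phi_poly w i mod q = phi_poly w' i mod q"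
          unfolding w_def phi_poly_restrict cong_def .
        also have "\<dots> = phi_poly w' i mod (int p * q) mod q"
          by (simp add: mod_mod_cancel)
        also have "phi_poly w' i mod (int p * q) = z' i"
        proof -
          have "phiN p (Suc N) w' i = z' i" using w' unfolding fiber_def by simp
          then show ?thesis using True unfolding phiN_def pq by simp
        qed
        finally show ?thesis using True unfolding phiN_def z_def q by simp
      next
        case False then show ?thesis unfolding phiN_def z_def by simp
      qed
    qed
    then have "w \<in> F" using wcl unfolding F_def fiber_def by simp
    moreover have "w' \<in> Lift w" using w' unfolding Lift_def w_def by simp
    ultimately show "w' \<in> (\<Union>w\<in>F. Lift w)" by blast
  qed (auto simp: Lift_def)
  have Lift_eq: "Lift w = L w ` Lin p c (e w)" if wF: "w \<in> F" for w
  proof (intro equalityI subsetI)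
    fix w' assume w': "w' \<in> Lift w"
    define t where "t = restrict (\<lambda>j. w' j div q) {..<9}"
    have w'r: "0 \<le> w' j \<and> w' j < int p * q" if "j < 9" for j
      using w' that pq unfolding Lift_def fiber_def classv_def by (auto simp: PiE_iff)
    have tP: "t \<in> PiE {..<9} (\<lambda>_. {0..<int p})"
    proof -
      have "0 \<le> w' j div q \<and> w' j div q < int p" if "j < 9" for j
      proof
        show "0 \<le> w' j div q" using w'r[OF that] qpos by (simp add: pos_imp_zdiv_nonneg_iff)
        have "q * (w' j div q) + w' j mod q = w' j" by (rule mult_div_mod_eq)
        moreover have "w' j mod q \<ge> 0" using qpos by simp
        moreover have "w' j < q * int p" using w'r[OF that] by (simp add: mult.commute)
        ultimately have "q * (w' j div q) < q * int p" by linarith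
        then show "w' j div q < int p" using qpos by simp
      qed
      then show ?thesis unfolding t_def by (auto simp: PiE_iff)
    qed
    have w'L: "w' = L w t"
    proof
      fix j show "w' j = L w t j"
      proof (cases "j < 9")
        case True
        then have "w' j mod q = w j" using w' unfolding Lift_def by simp
        moreover have "L w t j = w j + q * (w' j div q)" using True unfolding L_def t_def by simp
        moreover have "w' j = q * (w' j div q) + w' j mod q" by simp
        ultimately show ?thesis by linarith
      next
        case False then show ?thesis using w' unfolding L_def Lift_def fiber_def classv_def
          by (auto simp: PiE_iff extensional_def)
      qed
    qed
    have "t \<in> Lin p c (e w)"
      using lift_mem[OF p N q wF[unfolded F_def] z' z_def tP] w' w'L
      unfolding Lift_def L_def e_def by simp
    then show "w' \<in> L w ` Lin p c (e w)" using w'L by blast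
  next
    fix w' assume "w' \<in> L w ` Lin p c (e w)"
    then obtain t where t: "t \<in> Lin p c (e w)" and w'L: "w' = L w t" by blast
    have tP: "t \<in> PiE {..<9} (\<lambda>_. {0..<int p})" using t unfolding Lin_def by simp
    have "w' \<in> fiber p (Suc N) c z'"
      using lift_mem[OF p N q wF[unfolded F_def] z' z_def tP] t w'L
      unfolding L_def e_def by simp
    moreover have "w' j mod q = w j" if "j < 9" for j
    proof -
      have "0 \<le> w j \<and> w j < q" using wF that q unfolding F_def fiber_def classv_def
        by (auto simp: PiE_iff)
      then show ?thesis using that unfolding w'L L_def by simp
    qed
    ultimately show "w' \<in> Lift w" unfolding Lift_def by simp
  qed
  have card_Lift: "card (Lift w) = p" if wF: "w \<in> F" for w
  proof -
    have "inj_on (L w) (Lin p c (e w))"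
    proof
      fix t t' assume t: "t \<in> Lin p c (e w)" and t': "t' \<in> Lin p c (e w)" and eq: "L w t = L w t'"
      show "t = t'"
      proof
        fix j show "t j = t' j"
        proof (cases "j < 9")
          case True
          have "L w t j = L w t' j" using eq by simp
          then have "w j + q * t j = w j + q * t' j" using True unfolding L_def by simp
          then show ?thesis using qpos by simp
        next
          case False then show ?thesis using t t' unfolding Lin_def by (auto simp: PiE_iff extensional_def)
        qed
      qed
    qed
    then show ?thesis using Lift_eq[OF wF] linc by (simp add: card_image)
  qed
  have disj: "Lift w1 \<inter> Lift w2 = {}" if "w1 \<in> F" "w2 \<in> F" "w1 \<noteq> w2" for w1 w2
  proof (rule ccontr)
    assume "Lift w1 \<inter> Lift w2 \<noteq> {}"
    then obtain w' where "w' \<in> Lift w1" "w' \<in> Lift w2" by blast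
    then have "\<forall>j<9. w1 j = w2 j" unfolding Lift_def by auto
    moreover have "w1 \<in> extensional {..<9}" "w2 \<in> extensional {..<9}"
      using that unfolding F_def fiber_def classv_def by (auto simp: PiE_iff)
    ultimately have "w1 = w2" by (intro extensionalityI) auto
    then show False using that by simp
  qed
  have "card (fiber p (Suc N) c z') = (\<Sum>w\<in>F. card (Lift w))"
    unfolding cover
  proof (rule card_UN_disjoint[OF finF])
    show "\<forall>w\<in>F. finite (Lift w)" unfolding Lift_def using fin2 by auto
    show "\<forall>w1\<in>F. \<forall>w2\<in>F. w1 \<noteq> w2 \<longrightarrow> Lift w1 \<inter> Lift w2 = {}" using disj by blast
  qed
  also have "\<dots> = card F * p" using card_Lift by simp
  finally show ?thesis unfolding F_def z_def .
qed


lemma fiber_card: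
  assumes p: "p > 1" and linc: "\<And>e. card (Lin p c e) = p"
  shows "z \<in> classv p 8 (Suc n) (phi_poly c) \<Longrightarrow> card (fiber p (Suc n) c z) = p ^ n"
proof (induction n arbitrary: z)
  case 0
  have "z \<in> classv p 8 1 (phi_poly c)" using 0 by simp
  from fiber_base[OF p this] show ?case by simp
next
  case (Suc n)
  have "card (fiber p (Suc (Suc n)) c z) = card (fiber p (Suc n) c (restrict (\<lambda>i. z i mod (int p ^ Suc n)) {..<8})) * p"
    by (rule fiber_step[OF p _ refl Suc.prems linc]) simp
  also have "\<dots> = p ^ n * p"
  proof -
    have "restrict (\<lambda>i. z i mod (int p ^ Suc n)) {..<8} \<in> classv p 8 (Suc n) (phi_poly c)"
      by (rule classv_down[OF p _ refl Suc.prems]) simp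
    then have X: "card (fiber p (Suc n) c (restrict (\<lambda>i. z i mod (int p ^ Suc n)) {..<8})) = p ^ n"
      by (rule Suc.IH)
    show ?thesis by (simp only: X)
  qed
  finally show ?case by simp
qed

lemma all8: "(\<forall>i<(8::nat). P i) \<longleftrightarrow> P 0 \<and> P 1 \<and> P 2 \<and> P 3 \<and> P 4 \<and> P 5 \<and> P 6 \<and> P 7"
proof -
  have "i < 8 \<Longrightarrow> i = 0 \<or> i = 1 \<or> i = 2 \<or> i = 3 \<or> i = 4 \<or> i = 5 \<or> i = 6 \<or> i = 7" for i :: nat
    by presburger
  then show ?thesis by auto
qed

lemma lt9: "(i::nat) < 9 \<Longrightarrow> i = 0 \<or> i = 1 \<or> i = 2 \<or> i = 3 \<or> i = 4 \<or> i = 5 \<or> i = 6 \<or> i = 7 \<or> i = 8"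
  by presburger

lemma Lin_ii_iff: "t \<in> Lin p Fbar_ii e \<longleftrightarrow> t \<in> PiE {..<9} (\<lambda>_. {0..<int p}) \<and>
  [t 3 = e 0] (mod int p) \<and> [t 4 = e 1] (mod int p) \<and> [t 5 = e 2] (mod int p) \<and>
  [- t 0 = e 3] (mod int p) \<and> [- t 1 = e 4] (mod int p) \<and> [- t 2 - t 6 = e 5] (mod int p) \<and>
  [- t 7 = e 6] (mod int p) \<and> [- t 8 = e 7] (mod int p)"
  unfolding Lin_def all8 by (simp add: Dlin_def Bl_def phi_poly_def Fbar_ii_def algebra_simps)

lemma cong_small: "0 \<le> (x::int) \<Longrightarrow> x < m \<Longrightarrow> [x = y] (mod m) \<Longrightarrow> x = y mod m"
  unfolding cong_def by simp

lemma cong_mod_self: "[(y::int) mod m = y] (mod m)"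
  unfolding cong_def by simp

definition tau_ii :: "int \<Rightarrow> (nat \<Rightarrow> int) \<Rightarrow> int \<Rightarrow> nat \<Rightarrow> int" where
  "tau_ii P e s = (\<lambda>j\<in>{..<9}. if j = 0 then (- e 3) mod P else if j = 1 then (- e 4) mod P
     else if j = 2 then s else if j = 3 then e 0 mod P else if j = 4 then e 1 mod P
     else if j = 5 then e 2 mod P else if j = 6 then (- e 5 - s) mod P
     else if j = 7 then (- e 6) mod P else (- e 7) mod P)"

lemma Lin_ii_card:
  assumes p: "p > 1"
  shows "card (Lin p Fbar_ii e) = p"
proof -
  let ?P = "int p"
  have Ppos: "?P > 0" using p by simp
  have bij: "bij_betw (\<lambda>t. t 2) (Lin p Fbar_ii e) {0..<?P}"
  proof (rule bij_betw_byWitness[where f' = "tau_ii ?P e"])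
    show "\<forall>t\<in>Lin p Fbar_ii e. tau_ii ?P e (t 2) = t"
    proof
      fix t assume t: "t \<in> Lin p Fbar_ii e"
      note tt = t[unfolded Lin_ii_iff]
      have r: "0 \<le> t j \<and> t j < ?P" if "j < 9" for j using tt that by (auto simp: PiE_iff)
      show "tau_ii ?P e (t 2) = t"
      proof
        fix j show "tau_ii ?P e (t 2) j = t j"
        proof (cases "j < 9")
          case False then show ?thesis using tt by (auto simp: tau_ii_def PiE_iff extensional_def)
        next
          case True
          have c0: "[t 0 = - e 3] (mod ?P)" using tt cong_minus_minus_iff[of "t 0" "- e 3" ?P] by simp
          have c1: "[t 1 = - e 4] (mod ?P)" using tt cong_minus_minus_iff[of "t 1" "- e 4" ?P] by simp
          have c7: "[t 7 = - e 6] (mod ?P)" using tt cong_minus_minus_iff[of "t 7" "- e 6" ?P] by simp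
          have c8: "[t 8 = - e 7] (mod ?P)" using tt cong_minus_minus_iff[of "t 8" "- e 7" ?P] by simp
          have c6: "[t 6 = - e 5 - t 2] (mod ?P)"
          proof -
            have "[- t 2 - t 6 = e 5] (mod ?P)" using tt by simp
            then have "?P dvd (- t 2 - t 6 - e 5)" by (simp add: cong_iff_dvd_diff)
            then have "?P dvd (t 6 - (- e 5 - t 2))"
            proof -
              have "t 6 - (- e 5 - t 2) = - (- t 2 - t 6 - e 5)" by simp
              then show ?thesis using \<open>?P dvd (- t 2 - t 6 - e 5)\<close> by (simp only: dvd_minus_iff)
            qed
            then show ?thesis by (simp add: cong_iff_dvd_diff)
          qed
          have "t 0 = (- e 3) mod ?P" using r[of 0] c0 by (intro cong_small) auto
          moreover have "t 1 = (- e 4) mod ?P" using r[of 1] c1 by (intro cong_small) auto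
          moreover have "t 6 = (- e 5 - t 2) mod ?P" using r[of 6] c6 by (intro cong_small) auto
          moreover have "t 7 = (- e 6) mod ?P" using r[of 7] c7 by (intro cong_small) auto
          moreover have "t 8 = (- e 7) mod ?P" using r[of 8] c8 by (intro cong_small) auto
          moreover have "t 3 = e 0 mod ?P" using r[of 3] tt by (intro cong_small) auto
          moreover have "t 4 = e 1 mod ?P" using r[of 4] tt by (intro cong_small) auto
          moreover have "t 5 = e 2 mod ?P" using r[of 5] tt by (intro cong_small) auto
          ultimately show ?thesis using lt9[OF True] unfolding tau_ii_def
            by (elim disjE) simp_all
        qed
      qed
    qed
    show "\<forall>s\<in>{0..<?P}. tau_ii ?P e s 2 = s" by (simp add: tau_ii_def)
    show "(\<lambda>t. t 2) ` Lin p Fbar_ii e \<subseteq> {0..<?P}" by (auto simp: Lin_ii_iff PiE_iff)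
    show "tau_ii ?P e ` {0..<?P} \<subseteq> Lin p Fbar_ii e"
    proof
      fix t assume "t \<in> tau_ii ?P e ` {0..<?P}"
      then obtain s where s: "s \<in> {0..<?P}" and ts: "t = tau_ii ?P e s" by blast
      have pi: "t \<in> PiE {..<9} (\<lambda>_. {0..<int p})"
        using s Ppos unfolding ts tau_ii_def by (auto simp: PiE_iff)
      have "[- t 2 - t 6 = e 5] (mod ?P)"
        unfolding ts tau_ii_def cong_def by (simp add: mod_simps)
      moreover have "[- t 0 = e 3] (mod ?P)" "[- t 1 = e 4] (mod ?P)" "[- t 7 = e 6] (mod ?P)"
        "[- t 8 = e 7] (mod ?P)" "[t 3 = e 0] (mod ?P)" "[t 4 = e 1] (mod ?P)" "[t 5 = e 2] (mod ?P)"
        unfolding ts tau_ii_def cong_def by (simp_all add: mod_simps)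
      ultimately show "t \<in> Lin p Fbar_ii e" using pi unfolding Lin_ii_iff by simp
    qed
  qed
  then show ?thesis using bij_betw_same_card by fastforce
qed


lemma Lin_i_iff: "t \<in> Lin p (Fbar_i a b c) e \<longleftrightarrow> t \<in> PiE {..<9} (\<lambda>_. {0..<int p}) \<and>
  [t 3 = e 0] (mod int p) \<and> [t 4 = e 1] (mod int p) \<and> [t 5 = e 2] (mod int p) \<and>
  [- (c * t 0) - a * t 6 = e 3] (mod int p) \<and>
  [- (c * t 1) - (a * t 7 + b * t 6) = e 4] (mod int p) \<and>
  [- (c * t 2) - (b * t 7 + (c * t 6 + a * t 8)) = e 5] (mod int p) \<and>
  [- (c * t 7) - b * t 8 = e 6] (mod int p) \<and> [- (c * t 8) - 0 = e 7] (mod int p)"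
  unfolding Lin_def all8 by (simp add: Dlin_def Bl_def phi_poly_def Fbar_i_def algebra_simps)

lemma solve_iff:
  fixes c v x r y P :: int
  assumes v: "[c * v = 1] (mod P)"
  shows "[- (c * x) - r = y] (mod P) \<longleftrightarrow> [x = (- y - r) * v] (mod P)"
proof -
  have "[- (c * x) - r = y] (mod P) \<longleftrightarrow> [c * x = - y - r] (mod P)"
  proof -
    have "- (c * x) - r - y = - (c * x - (- y - r))" by simp
    then show ?thesis unfolding cong_iff_dvd_diff by (simp only: dvd_minus_iff)
  qed
  also have "\<dots> \<longleftrightarrow> [x = (- y - r) * v] (mod P)"
  proof
    assume h: "[c * x = - y - r] (mod P)"
    have "[x * (c * v) = x * 1] (mod P)" by (rule cong_scalar_left[OF v])
    then have "[x = v * (c * x)] (mod P)" by (simp add: ac_simps cong_sym)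
    moreover have "[v * (c * x) = v * (- y - r)] (mod P)" by (rule cong_scalar_left[OF h])
    ultimately show "[x = (- y - r) * v] (mod P)" by (metis cong_trans mult.commute)
  next
    assume h: "[x = (- y - r) * v] (mod P)"
    have "[c * x = c * ((- y - r) * v)] (mod P)" by (rule cong_scalar_left[OF h])
    moreover have "[(- y - r) * (c * v) = (- y - r) * 1] (mod P)" by (rule cong_scalar_left[OF v])
    ultimately show "[c * x = - y - r] (mod P)" by (metis cong_trans mult.commute mult.left_commute mult_1_right)
  qed
  finally show ?thesis .
qed

definition tau_i :: "int \<Rightarrow> int \<Rightarrow> int \<Rightarrow> int \<Rightarrow> int \<Rightarrow> (nat \<Rightarrow> int) \<Rightarrow> int \<Rightarrow> nat \<Rightarrow> int" where
  "tau_i P a b c v e s = (let T8 = ((- e 7 - 0) * v) mod P; T7 = ((- e 6 - b * T8) * v) mod P;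
     T0 = ((- e 3 - a * s) * v) mod P; T1 = ((- e 4 - (a * T7 + b * s)) * v) mod P;
     T2 = ((- e 5 - (b * T7 + (c * s + a * T8))) * v) mod P in
     (\<lambda>j\<in>{..<9}. if j = 0 then T0 else if j = 1 then T1
     else if j = 2 then T2 else if j = 3 then e 0 mod P else if j = 4 then e 1 mod P
     else if j = 5 then e 2 mod P else if j = 6 then s
     else if j = 7 then T7 else T8))"

lemma Lin_i_card:
  assumes p: "p > 1" and v: "[c * v = 1] (mod int p)"
  shows "card (Lin p (Fbar_i a b c) e) = p"
proof -
  let ?P = "int p"
  have Ppos: "?P > 0" using p by simp
  note sv = solve_iff[OF v]
  have bij: "bij_betw (\<lambda>t. t 6) (Lin p (Fbar_i a b c) e) {0..<?P}"
  proof (rule bij_betw_byWitness[where f' = "tau_i ?P a b c v e"])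
    show "\<forall>t\<in>Lin p (Fbar_i a b c) e. tau_i ?P a b c v e (t 6) = t"
    proof
      fix t assume t: "t \<in> Lin p (Fbar_i a b c) e"
      note tt = t[unfolded Lin_i_iff sv]
      have r: "0 \<le> t j \<and> t j < ?P" if "j < 9" for j using tt that by (auto simp: PiE_iff)
      show "tau_i ?P a b c v e (t 6) = t"
      proof
        fix j show "tau_i ?P a b c v e (t 6) j = t j"
        proof (cases "j < 9")
          case False then show ?thesis using tt by (auto simp: tau_i_def Let_def PiE_iff extensional_def)
        next
          case True
          have h8: "t 8 = ((- e 7 - 0) * v) mod ?P" using r[of 8] tt by (intro cong_small) auto
          have h7: "t 7 = ((- e 6 - b * t 8) * v) mod ?P" using r[of 7] tt by (intro cong_small) auto
          have h0: "t 0 = ((- e 3 - a * t 6) * v) mod ?P" using r[of 0] tt by (intro cong_small) auto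
          have h1: "t 1 = ((- e 4 - (a * t 7 + b * t 6)) * v) mod ?P" using r[of 1] tt by (intro cong_small) auto
          have h2: "t 2 = ((- e 5 - (b * t 7 + (c * t 6 + a * t 8))) * v) mod ?P" using r[of 2] tt by (intro cong_small) auto
          have "t 3 = e 0 mod ?P" using r[of 3] tt by (intro cong_small) auto
          moreover have "t 4 = e 1 mod ?P" using r[of 4] tt by (intro cong_small) auto
          moreover have "t 5 = e 2 mod ?P" using r[of 5] tt by (intro cong_small) auto
          ultimately show ?thesis using lt9[OF True] h0 h1 h2 h7 h8 unfolding tau_i_def Let_def
            by (elim disjE) simp_all
        qed
      qed
    qed
    show "\<forall>s\<in>{0..<?P}. tau_i ?P a b c v e s 6 = s" by (simp add: tau_i_def Let_def)
    show "(\<lambda>t. t 6) ` Lin p (Fbar_i a b c) e \<subseteq> {0..<?P}" by (auto simp: Lin_i_iff PiE_iff)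
    show "tau_i ?P a b c v e ` {0..<?P} \<subseteq> Lin p (Fbar_i a b c) e"
    proof
      fix t assume "t \<in> tau_i ?P a b c v e ` {0..<?P}"
      then obtain s where s: "s \<in> {0..<?P}" and ts: "t = tau_i ?P a b c v e s" by blast
      have pi: "t \<in> PiE {..<9} (\<lambda>_. {0..<int p})"
        using s Ppos unfolding ts tau_i_def Let_def by (auto simp: PiE_iff)
      have "[t 3 = e 0] (mod ?P)" "[t 4 = e 1] (mod ?P)" "[t 5 = e 2] (mod ?P)"
        "[t 0 = (- e 3 - a * t 6) * v] (mod ?P)"
        "[t 1 = (- e 4 - (a * t 7 + b * t 6)) * v] (mod ?P)"
        "[t 2 = (- e 5 - (b * t 7 + (c * t 6 + a * t 8))) * v] (mod ?P)"
        "[t 7 = (- e 6 - b * t 8) * v] (mod ?P)"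
        "[t 8 = (- e 7 - 0) * v] (mod ?P)"
        unfolding ts tau_i_def Let_def cong_def by simp_all
      then show "t \<in> Lin p (Fbar_i a b c) e" using pi unfolding Lin_i_iff sv by simp
    qed
  qed
  then show ?thesis using bij_betw_same_card by fastforce
qed

lemma irred_inv:
  assumes "prime p" "irreducible_bqf_mod p a b c"
  shows "\<exists>v. [c * v = 1] (mod int p)"
proof -
  have "c mod int p \<noteq> 0"
  proof
    assume c0: "c mod int p = 0"
    have "a mod int p = (a * 1) mod int p \<and> b mod int p = (a * 0 + b * 1) mod int p
       \<and> c mod int p = (b * 0) mod int p" using c0 by simp
    then show False using assms(2) unfolding irreducible_bqf_mod_def by blast
  qed
  then have "\<not> int p dvd c" by (simp add: dvd_eq_mod_eq_0)
  moreover have "prime (int p)" using assms(1) by simp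
  ultimately have "coprime (int p) c" by (rule prime_imp_coprime[rotated])
  then have "coprime c (int p)" by (simp add: ac_simps)
  then show ?thesis by (rule cong_solve_coprime_int)
qed

lemma fin_dep_meas:
  fixes f :: "('i \<Rightarrow> 'a) \<Rightarrow> 'b::countable" and M :: "'i \<Rightarrow> 'a measure"
  assumes J: "finite J" "J \<subseteq> I"
    and cnt: "\<And>i. i \<in> J \<Longrightarrow> countable (space (M i))"
    and pw: "\<And>i. i \<in> J \<Longrightarrow> sets (M i) = Pow (space (M i))"
    and fg: "\<And>x. x \<in> space (PiM I M) \<Longrightarrow> f x = g (restrict x J)"
  shows "f \<in> measurable (PiM I M) (count_space UNIV)"
proof (subst measurable_count_space_eq2_countable, intro conjI ballI)
  show "f \<in> space (PiM I M) \<rightarrow> UNIV" by simp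
  fix a :: 'b
  define Y where "Y = {y \<in> PiE J (\<lambda>i. space (M i)). g y = a}"
  have eq: "f -` {a} \<inter> space (PiM I M) = (\<Union>y\<in>Y. prod_emb I M J (PiE J (\<lambda>i. {y i})))"
  proof (intro equalityI subsetI)
    fix x assume x: "x \<in> f -` {a} \<inter> space (PiM I M)"
    then have "restrict x J \<in> Y" using fg J unfolding Y_def by (auto simp: space_PiM PiE_iff)
    moreover have "x \<in> prod_emb I M J (PiE J (\<lambda>i. {restrict x J i}))"
      using x J by (auto simp: prod_emb_iff space_PiM PiE_iff)
    ultimately show "x \<in> (\<Union>y\<in>Y. prod_emb I M J (PiE J (\<lambda>i. {y i})))" by blast
  next
    fix x assume "x \<in> (\<Union>y\<in>Y. prod_emb I M J (PiE J (\<lambda>i. {y i})))"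
    then obtain y where y: "y \<in> Y" and x: "x \<in> prod_emb I M J (PiE J (\<lambda>i. {y i}))" by blast
    have "restrict x J = y"
    proof
      fix i show "restrict x J i = y i"
        using x y unfolding Y_def by (cases "i \<in> J") (auto simp: prod_emb_iff PiE_iff extensional_def)
    qed
    moreover have xs: "x \<in> space (PiM I M)" using x by (auto simp: prod_emb_iff space_PiM PiE_iff)
    ultimately show "x \<in> f -` {a} \<inter> space (PiM I M)" using fg[OF xs] y unfolding Y_def by auto
  qed
  have "countable Y" unfolding Y_def
    by (rule countable_subset[OF _ countable_PiE[OF J(1) cnt]]) auto
  then have "(\<Union>y\<in>Y. prod_emb I M J (PiE J (\<lambda>i. {y i}))) \<in> sets (PiM I M)"
  proof (rule sets.countable_UN'')
    fix y assume "y \<in> Y"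
    then show "prod_emb I M J (PiE J (\<lambda>i. {y i})) \<in> sets (PiM I M)"
      using J pw unfolding Y_def by (intro sets_PiM_I) (auto simp: PiE_iff)
  qed
  then show "f -` {a} \<inter> space (PiM I M) \<in> sets (PiM I M)" using eq by simp
qed

abbreviation "SP \<equiv> (PiM UNIV (\<lambda>_. count_space UNIV) :: (nat \<Rightarrow> int) measure)"
abbreviation "DG p \<equiv> (PiM UNIV (\<lambda>_. uniform_count_measure {0..<int p}) :: (nat \<Rightarrow> int) measure)"

lemma space_SP[simp]: "space SP = UNIV"
  by (simp add: space_PiM PiE_UNIV_domain)

lemma space_DG: "space (DG p) = {d. \<forall>i. d i \<in> {0..<int p}}"
  by (auto simp: space_PiM PiE_UNIV_domain space_uniform_count_measure)

definition dig :: "nat \<Rightarrow> nat \<Rightarrow> int \<Rightarrow> int" where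
  "dig p i r = r div (int p ^ i) mod int p"

lemma base_expansion:
  assumes "p > 0"
  shows "r mod int p ^ n = (\<Sum>i<n. dig p i r * int p ^ i)"
proof (induction n)
  case 0 then show ?case by simp
next
  case (Suc n)
  have "r mod (int p ^ n * int p) = int p ^ n * (r div int p ^ n mod int p) + r mod int p ^ n"
    using assms by (simp add: zmod_zmult2_eq)
  then show ?case using Suc by (simp add: dig_def mult.commute)
qed

lemma from_digits_mod:
  assumes p: "p > 0" and d: "\<forall>i. d i \<in> {0..<int p}" and k: "k \<le> n"
  shows "from_digits p d n mod int p ^ k = from_digits p d k"
  using k
proof (induction n)
  case 0 then show ?case by (simp add: from_digits_def)
next
  case (Suc n)
  show ?case
  proof (cases "k = Suc n")
    case True
    have "0 \<le> from_digits p d (Suc n) \<and> from_digits p d (Suc n) < int p ^ Suc n"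
    proof -
      have "\<forall>m. 0 \<le> from_digits p d m \<and> from_digits p d m < int p ^ m"
      proof
        fix m show "0 \<le> from_digits p d m \<and> from_digits p d m < int p ^ m"
        proof (induction m)
          case 0 then show ?case by (simp add: from_digits_def)
        next
          case (Suc m)
          have dm: "0 \<le> d m" "d m \<le> int p - 1" using d by auto
          have "d m * int p ^ m \<le> (int p - 1) * int p ^ m" using dm by (intro mult_right_mono) auto
          then show ?case using Suc dm unfolding from_digits_def by (auto simp: algebra_simps)
        qed
      qed
      then show ?thesis by blast
    qed
    then show ?thesis using True by simp
  next
    case False
    then have kn: "k \<le> n" using Suc.prems by simp
    have "from_digits p d (Suc n) = from_digits p d n + d n * int p ^ n"
      unfolding from_digits_def by simp
    moreover have "int p ^ k dvd int p ^ n" using kn by (simp add: le_imp_power_dvd)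
    ultimately have "from_digits p d (Suc n) mod int p ^ k = from_digits p d n mod int p ^ k"
      by (metis dvd_def mod_mult_self2 mult.assoc mult.commute)
    then show ?thesis using Suc.IH[OF kn] by simp
  qed
qed


lemma from_digits_range:
  assumes d: "\<forall>i. d i \<in> {0..<int p}"
  shows "0 \<le> from_digits p d m \<and> from_digits p d m < int p ^ m"
proof (induction m)
  case 0 then show ?case by (simp add: from_digits_def)
next
  case (Suc m)
  have dm: "0 \<le> d m" "d m \<le> int p - 1" using d by auto
  have "d m * int p ^ m \<le> (int p - 1) * int p ^ m" using dm by (intro mult_right_mono) auto
  then show ?case using Suc dm unfolding from_digits_def by (auto simp: algebra_simps)
qed

lemma from_digits_Zp:
  assumes p: "p > 0" and d: "\<forall>i. d i \<in> {0..<int p}"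
  shows "from_digits p d \<in> Zp p"
  unfolding Zp_def using from_digits_range[OF d] from_digits_mod[OF p d] by auto

lemma from_digits_eq_iff:
  assumes p: "p > 0" and d: "\<forall>i. d i \<in> {0..<int p}" and r: "0 \<le> r" "r < int p ^ n"
  shows "from_digits p d n = r \<longleftrightarrow> (\<forall>i<n. d i = dig p i r)"
proof
  assume h: "\<forall>i<n. d i = dig p i r"
  have "from_digits p d n = (\<Sum>i<n. dig p i r * int p ^ i)"
    unfolding from_digits_def using h by (intro sum.cong) auto
  also have "\<dots> = r mod int p ^ n" using base_expansion[OF p] by simp
  also have "\<dots> = r" using r by simp
  finally show "from_digits p d n = r" .
next
  assume h: "from_digits p d n = r"
  show "\<forall>i<n. d i = dig p i r"
  proof (intro allI impI)
    fix i assume i: "i < n"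
    have "r mod (int p ^ i * int p) = int p ^ i * (r div int p ^ i mod int p) + r mod int p ^ i"
      using p by (simp add: zmod_zmult2_eq)
    moreover have "r mod (int p ^ i * int p) = from_digits p d (Suc i)"
      using from_digits_mod[OF p d, of "Suc i" n] i h by (simp add: mult.commute)
    moreover have "r mod int p ^ i = from_digits p d i"
      using from_digits_mod[OF p d, of i n] i h by simp
    moreover have "from_digits p d (Suc i) = from_digits p d i + d i * int p ^ i"
      unfolding from_digits_def by simp
    ultimately have "int p ^ i * dig p i r = int p ^ i * d i" unfolding dig_def by (simp add: mult.commute)
    then show "d i = dig p i r" using p by simp
  qed
qed

lemma prob_space_DG: "p > 0 \<Longrightarrow> prob_space (DG p)"
  by (intro prob_space_PiM prob_space_uniform_count_measure) auto

lemma from_digits_meas: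
  assumes p: "p > 0"
  shows "from_digits p \<in> measurable (DG p) SP"
proof -
  have "(\<lambda>d n. from_digits p d n) \<in> measurable (DG p) SP"
  proof (rule measurable_PiM_single')
    fix n :: nat
    show "(\<lambda>d. from_digits p d n) \<in> measurable (DG p) (count_space UNIV)"
      by (rule fin_dep_meas[where J = "{..<n}" and g = "\<lambda>y. \<Sum>i<n. y i * int p ^ i"])
         (auto simp: space_uniform_count_measure sets_uniform_count_measure from_digits_def)
  qed (auto simp: space_PiM)
  then show ?thesis by simp
qed

lemma prob_space_haar: "p > 0 \<Longrightarrow> prob_space (haar_Zp p)"
  unfolding haar_Zp_def
  by (rule prob_space.prob_space_distr[OF prob_space_DG from_digits_meas])

lemma sets_haar[simp]: "sets (haar_Zp p) = sets SP"
  unfolding haar_Zp_def by simp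

lemma space_haar[simp]: "space (haar_Zp p) = UNIV"
  unfolding haar_Zp_def by simp

lemma emeasure_haar:
  assumes p: "p > 0" and A: "A \<in> sets SP"
  shows "emeasure (haar_Zp p) A = emeasure (DG p) (from_digits p -` A \<inter> space (DG p))"
  unfolding haar_Zp_def using A by (intro emeasure_distr from_digits_meas p)

lemma preimage_level:
  assumes p: "p > 0" and r: "0 \<le> r" "r < int p ^ n"
  shows "from_digits p -` {u. u n = r} \<inter> space (DG p) =
    prod_emb UNIV (\<lambda>_. uniform_count_measure {0..<int p}) {..<n} (PiE {..<n} (\<lambda>i. {dig p i r}))"
proof (intro equalityI subsetI)
  fix d assume d: "d \<in> from_digits p -` {u. u n = r} \<inter> space (DG p)"
  then have dd: "\<forall>i. d i \<in> {0..<int p}" by (simp add: space_DG)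
  then have "\<forall>i<n. d i = dig p i r" using from_digits_eq_iff[OF p dd r] d by simp
  then show "d \<in> prod_emb UNIV (\<lambda>_. uniform_count_measure {0..<int p}) {..<n} (PiE {..<n} (\<lambda>i. {dig p i r}))"
    using dd by (auto simp: prod_emb_iff space_uniform_count_measure PiE_iff)
next
  fix d assume d: "d \<in> prod_emb UNIV (\<lambda>_. uniform_count_measure {0..<int p}) {..<n} (PiE {..<n} (\<lambda>i. {dig p i r}))"
  then have dd: "\<forall>i. d i \<in> {0..<int p}" by (auto simp: prod_emb_iff space_uniform_count_measure)
  have "\<forall>i<n. d i = dig p i r" using d by (auto simp: prod_emb_iff PiE_iff)
  then show "d \<in> from_digits p -` {u. u n = r} \<inter> space (DG p)"
    using from_digits_eq_iff[OF p dd r] dd by (simp add: space_DG)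
qed

lemma level_sets: "{u::nat \<Rightarrow> int. u n = r} \<in> sets SP"
proof -
  have "(\<lambda>u::nat\<Rightarrow>int. u n) -` {r} \<inter> space SP \<in> sets SP"
    by (rule measurable_sets[OF measurable_component_singleton]) auto
  then show ?thesis by (simp add: vimage_def)
qed

lemma emeasure_haar_level:
  assumes p: "p > 0" and r: "0 \<le> r" "r < int p ^ n"
  shows "emeasure (haar_Zp p) {u. u n = r} = ennreal (1 / real p ^ n)"
proof -
  have "emeasure (haar_Zp p) {u. u n = r} =
     emeasure (DG p) (prod_emb UNIV (\<lambda>_. uniform_count_measure {0..<int p}) {..<n} (PiE {..<n} (\<lambda>i. {dig p i r})))"
    using emeasure_haar[OF p level_sets] preimage_level[OF p r] by simp
  also have "\<dots> = (\<Prod>i<n. emeasure (uniform_count_measure {0..<int p}) {dig p i r})"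
    using p by (intro emeasure_PiM_emb prob_space_uniform_count_measure) (auto simp: sets_uniform_count_measure dig_def)
  also have "\<dots> = (\<Prod>i<n. ennreal (1 / real p))"
  proof (intro prod.cong refl)
    fix i
    have "dig p i r \<in> {0..<int p}" using p by (simp add: dig_def)
    then show "emeasure (uniform_count_measure {0..<int p}) {dig p i r} = ennreal (1 / real p)"
      apply (subst emeasure_uniform_count_measure) apply auto
      done
  qed
  also have "\<dots> = ennreal (1 / real p ^ n)" by (simp, subst ennreal_power) (auto simp: power_one_over)
  finally show ?thesis .
qed


lemma fin_pred_SP:
  assumes J: "finite J" and Q: "\<And>x. Q x = Q (restrict x J)"
  shows "{x. Q x} \<in> sets SP"
proof -
  have "Q \<in> measurable SP (count_space UNIV)"
    by (rule fin_dep_meas[where J = J and g = Q]) (use J Q in auto)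
  then have "Q -` {True} \<inter> space SP \<in> sets SP" by (rule measurable_sets) simp
  then show ?thesis by (simp add: vimage_def)
qed

lemma Zp_sets: "Zp p \<in> sets SP"
proof -
  have "Zp p = (\<Inter>n\<in>UNIV. {x. 0 \<le> x n \<and> x n < int p ^ n \<and> x (Suc n) mod (int p ^ n) = x n})"
    unfolding Zp_def by auto
  also have "\<dots> \<in> sets SP"
  proof (rule sets.countable_INT)
    show "range (\<lambda>n. {x. 0 \<le> x n \<and> x n < int p ^ n \<and> x (Suc n) mod (int p ^ n) = x n}) \<subseteq> sets SP"
    proof
      fix A assume "A \<in> range (\<lambda>n. {x. 0 \<le> x n \<and> x n < int p ^ n \<and> x (Suc n) mod (int p ^ n) = x n})"
      then obtain n where A: "A = {x. 0 \<le> x n \<and> x n < int p ^ n \<and> x (Suc n) mod (int p ^ n) = x n}" by blast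
      show "A \<in> sets SP" unfolding A by (rule fin_pred_SP[where J = "{n, Suc n}"]) auto
    qed
  qed simp
  finally show ?thesis .
qed

lemma Zp_bounds: "x \<in> Zp p \<Longrightarrow> 0 \<le> x n \<and> x n < int p ^ n"
  unfolding Zp_def by auto

lemma Zp_mod:
  assumes x: "x \<in> Zp p" shows "k \<le> N \<Longrightarrow> x k = x N mod int p ^ k"
proof (induction N)
  case 0 then show ?case using Zp_bounds[OF x, of 0] by simp
next
  case (Suc N)
  show ?case
  proof (cases "k = Suc N")
    case True then show ?thesis using Zp_bounds[OF x, of "Suc N"] by simp
  next
    case False
    then have kN: "k \<le> N" using Suc.prems by simp
    have "x N = x (Suc N) mod int p ^ N" using x unfolding Zp_def by auto
    moreover have "int p ^ k dvd int p ^ N" using kN by (simp add: le_imp_power_dvd)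
    ultimately show ?thesis using Suc.IH[OF kN] by (simp add: mod_mod_cancel)
  qed
qed

lemma emeasure_haar_Zp:
  assumes p: "p > 0" shows "emeasure (haar_Zp p) (Zp p) = 1"
proof -
  have "from_digits p -` Zp p \<inter> space (DG p) = space (DG p)"
    using from_digits_Zp[OF p] by (auto simp: space_DG)
  then show ?thesis using emeasure_haar[OF p Zp_sets] prob_space.emeasure_space_1[OF prob_space_DG[OF p]]
    by simp
qed

abbreviation "HV p m \<equiv> haar_Zp_vec p m"

lemma prob_space_HV: "p > 0 \<Longrightarrow> prob_space (HV p m)"
  unfolding haar_Zp_vec_def by (intro prob_space_PiM prob_space_haar)

lemma space_HV: "space (HV p m) = PiE {..<m} (\<lambda>_. UNIV)"
  unfolding haar_Zp_vec_def by (simp add: space_PiM)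

lemma sets_HV_PiE: "(\<And>j. j < m \<Longrightarrow> A j \<in> sets SP) \<Longrightarrow> PiE {..<m} A \<in> sets (HV p m)"
  unfolding haar_Zp_vec_def by (intro sets_PiM_I_finite) auto

lemma emeasure_HV_PiE:
  assumes p: "p > 0" and A: "\<And>j. j < m \<Longrightarrow> A j \<in> sets SP"
  shows "emeasure (HV p m) (PiE {..<m} A) = (\<Prod>j<m. emeasure (haar_Zp p) (A j))"
proof -
  have "emeasure (HV p m) (prod_emb {..<m} (\<lambda>_. haar_Zp p) {..<m} (PiE {..<m} A)) = (\<Prod>j<m. emeasure (haar_Zp p) (A j))"
    unfolding haar_Zp_vec_def using A p by (intro emeasure_PiM_emb prob_space_haar) auto
  moreover have "prod_emb {..<m} (\<lambda>_. haar_Zp p) {..<m} (PiE {..<m} A) = PiE {..<m} A"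
    by (rule prod_emb_PiE_same_index) auto
  ultimately show ?thesis by simp
qed

definition Zv :: "nat \<Rightarrow> nat \<Rightarrow> (nat \<Rightarrow> nat \<Rightarrow> int) set" where
  "Zv p m = PiE {..<m} (\<lambda>_. Zp p)"

lemma Zv_sets: "Zv p m \<in> sets (HV p m)"
  unfolding Zv_def by (intro sets_HV_PiE Zp_sets)

lemma AE_Zv:
  assumes p: "p > 0" shows "AE x in HV p m. x \<in> Zv p m"
proof -
  interpret prob_space "HV p m" by (rule prob_space_HV[OF p])
  have "emeasure (HV p m) (Zv p m) = 1"
    unfolding Zv_def using emeasure_HV_PiE[OF p Zp_sets] emeasure_haar_Zp[OF p] by simp
  then have "emeasure (HV p m) (space (HV p m) - Zv p m) = 0"
    using emeasure_compl[OF Zv_sets] emeasure_space_1 by simp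
  then have "space (HV p m) - Zv p m \<in> null_sets (HV p m)"
    using Zv_sets by (auto simp: null_sets_def)
  then show ?thesis by (rule AE_I') auto
qed

definition Cyl :: "nat \<Rightarrow> nat \<Rightarrow> (nat \<Rightarrow> int) \<Rightarrow> (nat \<Rightarrow> nat \<Rightarrow> int) set" where
  "Cyl m N z = PiE {..<m} (\<lambda>j. {u. u N = z j})"

lemma count_lemma:
  assumes p: "p > 0" and S: "S \<in> sets (HV p m)"
    and T: "T \<subseteq> PiE {..<m} (\<lambda>_. {0..<int p ^ N})"
    and ST: "\<And>x. x \<in> Zv p m \<Longrightarrow> x \<in> S \<longleftrightarrow> restrict (\<lambda>j. x j N) {..<m} \<in> T"
  shows "emeasure (HV p m) S = of_nat (card T) * ennreal ((1 / real p ^ N) ^ m)"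
proof -
  have finT: "finite T"
    by (rule finite_subset[OF T]) (intro finite_PiE, auto)
  define S' where "S' = (\<Union>z\<in>T. Cyl m N z)"
  have Cs: "Cyl m N z \<in> sets (HV p m)" for z
    unfolding Cyl_def by (intro sets_HV_PiE level_sets)
  have S's: "S' \<in> sets (HV p m)" unfolding S'_def using finT Cs by auto
  have "AE x in HV p m. x \<in> S \<longleftrightarrow> x \<in> S'"
    using AE_Zv[OF p]
  proof (rule AE_mp, intro AE_I2 impI)
    fix x assume x: "x \<in> Zv p m"
    have "x \<in> S' \<longleftrightarrow> restrict (\<lambda>j. x j N) {..<m} \<in> T"
    proof
      assume "x \<in> S'"
      then obtain z where z: "z \<in> T" "x \<in> Cyl m N z" unfolding S'_def by blast
      have "restrict (\<lambda>j. x j N) {..<m} = z"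
      proof
        fix j show "restrict (\<lambda>j. x j N) {..<m} j = z j"
          using z T by (cases "j < m") (auto simp: Cyl_def PiE_iff extensional_def subset_iff)
      qed
      then show "restrict (\<lambda>j. x j N) {..<m} \<in> T" using z by simp
    next
      assume "restrict (\<lambda>j. x j N) {..<m} \<in> T"
      moreover have "x \<in> Cyl m N (restrict (\<lambda>j. x j N) {..<m})"
        using x unfolding Cyl_def Zv_def by (auto simp: PiE_iff)
      ultimately show "x \<in> S'" unfolding S'_def by blast
    qed
    then show "x \<in> S \<longleftrightarrow> x \<in> S'" using ST[OF x] by simp
  qed
  then have "emeasure (HV p m) S = emeasure (HV p m) S'"
    by (rule emeasure_eq_AE[OF _ S S's])
  also have "\<dots> = (\<Sum>z\<in>T. emeasure (HV p m) (Cyl m N z))"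
    unfolding S'_def
  proof (rule sum_emeasure[symmetric])
    show "(\<lambda>z. Cyl m N z) ` T \<subseteq> sets (HV p m)" using Cs by auto
    show "finite T" by fact
    show "disjoint_family_on (\<lambda>z. Cyl m N z) T"
      unfolding disjoint_family_on_def
    proof (intro ballI impI)
      fix z z' assume zz: "z \<in> T" "z' \<in> T" "z \<noteq> z'"
      show "Cyl m N z \<inter> Cyl m N z' = {}"
      proof (rule ccontr)
        assume "Cyl m N z \<inter> Cyl m N z' \<noteq> {}"
        then obtain x where "x \<in> Cyl m N z" "x \<in> Cyl m N z'" by blast
        then have "\<forall>j<m. z j = z' j" unfolding Cyl_def by (auto simp: PiE_iff)
        moreover have "z \<in> extensional {..<m}" "z' \<in> extensional {..<m}" using zz T by (auto simp: PiE_iff)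
        ultimately have "z = z'" by (intro extensionalityI) auto
        then show False using zz by simp
      qed
    qed
  qed
  also have "\<dots> = (\<Sum>z\<in>T. ennreal ((1 / real p ^ N) ^ m))"
  proof (rule sum.cong[OF refl])
    fix z assume z: "z \<in> T"
    have "emeasure (HV p m) (Cyl m N z) = (\<Prod>j<m. emeasure (haar_Zp p) {u. u N = z j})"
      unfolding Cyl_def by (rule emeasure_HV_PiE[OF p level_sets])
    also have "\<dots> = (\<Prod>j<m. ennreal (1 / real p ^ N))"
    proof (rule prod.cong[OF refl])
      fix j assume "j \<in> {..<m}"
      then have "0 \<le> z j \<and> z j < int p ^ N" using z T by (auto simp: PiE_iff subset_iff)
      then show "emeasure (haar_Zp p) {u. u N = z j} = ennreal (1 / real p ^ N)"
        using emeasure_haar_level[OF p] by auto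
    qed
    also have "\<dots> = ennreal ((1 / real p ^ N) ^ m)" by (simp add: ennreal_power)
    finally show "emeasure (HV p m) (Cyl m N z) = ennreal ((1 / real p ^ N) ^ m)" .
  qed
  also have "\<dots> = of_nat (card T) * ennreal ((1 / real p ^ N) ^ m)" by simp
  finally show ?thesis .
qed


definition CylG :: "nat \<Rightarrow> nat \<Rightarrow> (nat \<Rightarrow> nat \<Rightarrow> int) \<Rightarrow> (nat \<Rightarrow> nat \<Rightarrow> int) set" where
  "CylG m n y = PiE {..<m} (\<lambda>j. {u. \<forall>k<n. u k = y j k})"

definition EG :: "nat \<Rightarrow> (nat \<Rightarrow> nat \<Rightarrow> int) set set" where
  "EG m = {CylG m n y | n y. True} \<union> {{}}"

lemma CylG_sets: "CylG m n y \<in> sets (HV p m)"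
  unfolding CylG_def by (intro sets_HV_PiE fin_pred_SP[where J = "{..<n}"]) auto

lemma EG_sets: "EG m \<subseteq> sets (HV p m)"
  unfolding EG_def using CylG_sets by auto

lemma EG_Pow: "EG m \<subseteq> Pow (PiE {..<m} (\<lambda>_. UNIV))"
  unfolding EG_def CylG_def by (auto simp: PiE_iff)

lemma CylG_0: "CylG m 0 y = PiE {..<m} (\<lambda>_. UNIV)"
  unfolding CylG_def by simp

lemma EG_Int_stable: "Int_stable (EG m)"
  unfolding Int_stable_def
proof (intro ballI)
  fix a b assume a: "a \<in> EG m" and b: "b \<in> EG m"
  show "a \<inter> b \<in> EG m"
  proof (cases "a = {} \<or> b = {}")
    case True then show ?thesis unfolding EG_def by auto
  next
    case False
    then obtain n y n' y' where ab: "a = CylG m n y" "b = CylG m n' y'" using a b unfolding EG_def by auto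
    show ?thesis
    proof (cases "\<forall>j<m. \<forall>k<min n n'. y j k = y' j k")
      case True
      define y'' where "y'' j k = (if k < n then y j k else y' j k)" for j k
      have "a \<inter> b = CylG m (max n n') y''"
        unfolding ab CylG_def PiE_Int
      proof (rule PiE_cong)
        fix j assume j: "j \<in> {..<m}"
        show "{u. \<forall>k<n. u k = y j k} \<inter> {u. \<forall>k<n'. u k = y' j k} = {u. \<forall>k<max n n'. u k = y'' j k}"
        proof (intro equalityI subsetI)
          fix u assume "u \<in> {u. \<forall>k<n. u k = y j k} \<inter> {u. \<forall>k<n'. u k = y' j k}"
          then show "u \<in> {u. \<forall>k<max n n'. u k = y'' j k}" unfolding y''_def by auto
        next
          fix u assume u: "u \<in> {u. \<forall>k<max n n'. u k = y'' j k}"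
          have "\<forall>k<n'. u k = y' j k"
          proof (intro allI impI)
            fix k assume k: "k < n'"
            show "u k = y' j k"
            proof (cases "k < n")
              case True then show ?thesis using u k j \<open>\<forall>j<m. \<forall>k<min n n'. y j k = y' j k\<close>
                unfolding y''_def by auto
            next
              case False then show ?thesis using u k unfolding y''_def by auto
            qed
          qed
          then show "u \<in> {u. \<forall>k<n. u k = y j k} \<inter> {u. \<forall>k<n'. u k = y' j k}"
            using u unfolding y''_def by auto
        qed
      qed
      then show ?thesis unfolding EG_def by blast
    next
      case False
      then obtain j k where jk: "j < m" "k < min n n'" "y j k \<noteq> y' j k" by blast
      have "a \<inter> b = {}"
      proof (rule ccontr)
        assume "a \<inter> b \<noteq> {}"
        then obtain x where xa: "x \<in> a" and xb: "x \<in> b" by blast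
        from xa have "\<forall>i\<in>{..<m}. \<forall>k<n. x i k = y i k" unfolding ab CylG_def by (simp add: PiE_iff)
        then have 1: "x j k = y j k" using jk by simp
        from xb have "\<forall>i\<in>{..<m}. \<forall>k<n'. x i k = y' i k" unfolding ab CylG_def by (simp add: PiE_iff)
        then have 2: "x j k = y' j k" using jk by simp
        show False using 1 2 jk by simp
      qed
      then show ?thesis unfolding EG_def by blast
    qed
  qed
qed

lemma sets_HV_sigma: "sets (HV p m) = sigma_sets (PiE {..<m} (\<lambda>_. UNIV)) (EG m)"
proof (intro equalityI)
  let ?\<Omega> = "PiE {..<m} (\<lambda>_. UNIV) :: (nat \<Rightarrow> nat \<Rightarrow> int) set"
  let ?\<Sigma> = "sigma ?\<Omega> (EG m)"
  show "sigma_sets ?\<Omega> (EG m) \<subseteq> sets (HV p m)"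
    using sets.sigma_sets_subset[OF EG_sets[of m p]] by (simp add: space_HV)
  have sS: "sets ?\<Sigma> = sigma_sets ?\<Omega> (EG m)" using EG_Pow by simp
  have spS: "space ?\<Sigma> = ?\<Omega>" using EG_Pow by simp
  have coord: "(\<lambda>x. x j k) \<in> measurable ?\<Sigma> (count_space UNIV)" if j: "j < m" for j k
  proof (subst measurable_count_space_eq2_countable, intro conjI ballI)
    show "(\<lambda>x. x j k) \<in> space ?\<Sigma> \<rightarrow> UNIV" by simp
    fix a :: int
    define Y where "Y = {y \<in> PiE {..<m} (\<lambda>_. PiE {..<Suc k} (\<lambda>_. UNIV :: int set)). y j k = a}"
    have eq: "(\<lambda>x. x j k) -` {a} \<inter> space ?\<Sigma> = (\<Union>y\<in>Y. CylG m (Suc k) y)"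
    proof (intro equalityI subsetI)
      fix x assume x: "x \<in> (\<lambda>x. x j k) -` {a} \<inter> space ?\<Sigma>"
      define y where "y = restrict (\<lambda>j'. restrict (x j') {..<Suc k}) {..<m}"
      have "y \<in> Y" using x j unfolding Y_def y_def by auto
      moreover have "x \<in> CylG m (Suc k) y" using x spS unfolding CylG_def y_def by (auto simp: PiE_iff)
      ultimately show "x \<in> (\<Union>y\<in>Y. CylG m (Suc k) y)" by blast
    next
      fix x assume "x \<in> (\<Union>y\<in>Y. CylG m (Suc k) y)"
      then obtain y where y: "y \<in> Y" "x \<in> CylG m (Suc k) y" by blast
      then show "x \<in> (\<lambda>x. x j k) -` {a} \<inter> space ?\<Sigma>"
        using j spS unfolding Y_def CylG_def by (auto simp: PiE_iff)
    qed
    have "countable Y" unfolding Y_def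
      by (rule countable_subset[OF _ countable_PiE[of "{..<m}" "\<lambda>_. PiE {..<Suc k} (\<lambda>_. UNIV :: int set)"]])
         (auto intro!: countable_PiE)
    then have "(\<Union>y\<in>Y. CylG m (Suc k) y) \<in> sets ?\<Sigma>"
    proof (rule sets.countable_UN'')
      fix y
      have "CylG m (Suc k) y \<in> sigma_sets ?\<Omega> (EG m)"
        by (rule sigma_sets.Basic) (auto simp: EG_def)
      then show "CylG m (Suc k) y \<in> sets ?\<Sigma>" using sS by simp
    qed
    then show "(\<lambda>x. x j k) -` {a} \<inter> space ?\<Sigma> \<in> sets ?\<Sigma>" using eq by simp
  qed
  have "(\<lambda>x j. x j) \<in> measurable ?\<Sigma> (HV p m)"
    unfolding haar_Zp_vec_def
  proof (rule measurable_PiM_single')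
    fix j assume j: "j \<in> {..<m}"
    have "(\<lambda>x k. x j k) \<in> measurable ?\<Sigma> SP"
      by (rule measurable_PiM_single') (use coord j in auto)
    then show "(\<lambda>x. x j) \<in> measurable ?\<Sigma> (haar_Zp p)"
      by (subst measurable_cong_sets[OF refl sets_haar]) simp
  next
    show "(\<lambda>x j. x j) \<in> space ?\<Sigma> \<rightarrow> PiE {..<m} (\<lambda>i. space (haar_Zp p))"
      using spS by simp
  qed
  then have idm: "(\<lambda>x. x) \<in> measurable ?\<Sigma> (HV p m)" by simp
  show "sets (HV p m) \<subseteq> sigma_sets ?\<Omega> (EG m)"
  proof
    fix A assume A: "A \<in> sets (HV p m)"
    have "(\<lambda>x. x) -` A \<inter> space ?\<Sigma> \<in> sets ?\<Sigma>" by (rule measurable_sets[OF idm A])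
    moreover have "(\<lambda>x. x) -` A \<inter> space ?\<Sigma> = A"
      using sets.sets_into_space[OF A] spS by (auto simp: space_HV)
    ultimately show "A \<in> sigma_sets ?\<Omega> (EG m)" using sS by simp
  qed
qed

lemma cm: "j < 9 \<Longrightarrow> (\<lambda>x. x j n) \<in> measurable (HV p 9) (count_space UNIV)"
proof -
  assume j: "j < 9"
  have "(\<lambda>x. x j) \<in> measurable (HV p 9) (haar_Zp p)"
    unfolding haar_Zp_vec_def by (rule measurable_component_singleton) (use j in simp)
  then have "(\<lambda>x. x j) \<in> measurable (HV p 9) SP"
    by (subst measurable_cong_sets[OF refl sets_haar[symmetric]])
  then show ?thesis by (rule measurable_compose) (rule measurable_component_singleton, simp)
qed


lemma rm: "(\<lambda>x. \<lambda>j\<in>{..<9}. x j n) \<in> measurable (HV p 9) (PiM {..<9} (\<lambda>_. count_space (UNIV :: int set)))"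
  by (rule measurable_restrict) (rule cm, simp)

lemma gm: "(\<lambda>y. phi_poly y i mod int p ^ n) \<in> measurable (PiM {..<9} (\<lambda>_. count_space (UNIV :: int set))) (count_space UNIV)"
proof (rule fin_dep_meas[where J = "{..<9}" and g = "\<lambda>y. phi_poly y i mod int p ^ n"])
  fix x :: "nat \<Rightarrow> int" assume "x \<in> space (PiM {..<9} (\<lambda>_. count_space (UNIV :: int set)))"
  then have "restrict x {..<9} = x" by (simp add: space_PiM)
  then show "phi_poly x i mod int p ^ n = phi_poly (restrict x {..<9}) i mod int p ^ n" by simp
qed auto


lemma fm: "(\<lambda>x. phi_poly (\<lambda>j. x j n) i mod int p ^ n) \<in> measurable (HV p 9) (count_space UNIV)"
proof -
  have "(\<lambda>x. (\<lambda>y. phi_poly y i mod int p ^ n) ((\<lambda>x. \<lambda>j\<in>{..<9}. x j n) x)) \<in> measurable (HV p 9) (count_space UNIV)"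
    by (rule measurable_compose[OF rm gm])
  then show ?thesis by (simp only: phi_poly_restrict)
qed

lemma Phi_meas: "Phi p \<in> measurable (HV p 9) (HV p 8)"
proof -
  have "(\<lambda>x. \<lambda>i\<in>{..<8}. \<lambda>n. phi_poly (\<lambda>j. x j n) i mod int p ^ n) \<in> measurable (HV p 9) (HV p 8)"
    unfolding haar_Zp_vec_def[of p 8]
  proof (rule measurable_restrict)
    fix i :: nat
    have "(\<lambda>x n. phi_poly (\<lambda>j. x j n) i mod int p ^ n) \<in> measurable (HV p 9) SP"
      by (rule measurable_PiM_single') (rule fm, simp)
    then show "(\<lambda>x n. phi_poly (\<lambda>j. x j n) i mod int p ^ n) \<in> measurable (HV p 9) (haar_Zp p)"
      by (subst measurable_cong_sets[OF refl sets_haar])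
  qed
  then show ?thesis unfolding Phi_def .
qed

lemma real_arith_final:
  fixes c q pr :: real
  assumes "q > 0" "pr > 0"
  shows "c * q * (1 / (q * pr)) ^ 9 / (1 / pr) ^ 9 = c * (1 / (q * pr)) ^ 8 / (1 / pr) ^ 8"
  using assms by (simp add: field_simps power_mult_distrib eval_nat_numeral)

lemma Phi_Zv:
  assumes p: "p > 0" and x: "x \<in> Zv p 9" shows "Phi p x \<in> Zv p 8"
proof -
  have xz: "x j \<in> Zp p" if "j < 9" for j using x that unfolding Zv_def by auto
  have "(\<lambda>n. phi_poly (\<lambda>j. x j n) i mod int p ^ n) \<in> Zp p" for i
    unfolding Zp_def
  proof (intro CollectI allI conjI)
    fix n
    show "0 \<le> phi_poly (\<lambda>j. x j n) i mod int p ^ n" using p by simp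
    show "phi_poly (\<lambda>j. x j n) i mod int p ^ n < int p ^ n" using p by simp
    have "[phi_poly (restrict (\<lambda>j. x j (Suc n)) {..<9}) i = phi_poly (restrict (\<lambda>j. x j n) {..<9}) i] (mod int p ^ n)"
    proof (rule phi_poly_cong)
      fix j show "[restrict (\<lambda>j. x j (Suc n)) {..<9} j = restrict (\<lambda>j. x j n) {..<9} j] (mod int p ^ n)"
        using Zp_mod[OF xz, of j n "Suc n"] by (cases "j < 9") (auto simp: cong_def)
    qed
    then show "phi_poly (\<lambda>j. x j (Suc n)) i mod int p ^ Suc n mod int p ^ n = phi_poly (\<lambda>j. x j n) i mod int p ^ n"
      unfolding phi_poly_restrict cong_def by (simp add: mod_mod_cancel le_imp_power_dvd)
  qed
  then show ?thesis unfolding Zv_def Phi_def by auto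
qed


lemma Phi_level:
  "restrict (\<lambda>i. Phi p x i N) {..<8} = phiN p N (restrict (\<lambda>j. x j N) {..<9})"
  unfolding Phi_def phiN_def phi_poly_restrict by (auto simp: fun_eq_iff)

lemma classv_1:
  assumes p: "p > 0"
  shows "classv p m 1 c = {restrict (\<lambda>j. c j mod int p) {..<m}}"
proof (intro equalityI subsetI)
  fix w assume w: "w \<in> classv p m 1 c"
  have "w = restrict (\<lambda>j. c j mod int p) {..<m}"
  proof
    fix j show "w j = restrict (\<lambda>j. c j mod int p) {..<m} j"
      using w unfolding classv_def by (cases "j < m") (auto simp: PiE_iff extensional_def)
  qed
  then show "w \<in> {restrict (\<lambda>j. c j mod int p) {..<m}}" by simp
qed (use p in \<open>auto simp: classv_def PiE_iff\<close>)

lemma residue_Zv: "residue_class p m c = {x \<in> Zv p m. \<forall>j<m. x j 1 = c j mod int p}"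
  unfolding residue_class_def Zv_def by simp

lemma residue_sets: "residue_class p m c \<in> sets (HV p m)"
proof -
  have "residue_class p m c = Zv p m \<inter> PiE {..<m} (\<lambda>j. {u. u 1 = c j mod int p})"
    unfolding residue_Zv Zv_def by (simp add: set_eq_iff PiE_iff) blast
  then show ?thesis using Zv_sets sets_HV_PiE[OF level_sets] by auto
qed

lemma residue_char:
  assumes p: "p > 0" and N: "N \<ge> 1" and x: "x \<in> Zv p m"
  shows "x \<in> residue_class p m c \<longleftrightarrow> restrict (\<lambda>j. x j N) {..<m} \<in> classv p m N c"
proof -
  have xz: "x j \<in> Zp p" if "j < m" for j using x that unfolding Zv_def by auto
  have "x j 1 = x j N mod int p" if "j < m" for j using Zp_mod[OF xz[OF that], of 1 N] N by simp
  moreover have "0 \<le> x j N \<and> x j N < int p ^ N" if "j < m" for j using Zp_bounds[OF xz[OF that]] by simp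
  ultimately show ?thesis unfolding residue_Zv classv_def using x by (auto simp: PiE_iff)
qed

lemma emeasure_residue:
  assumes p: "p > 0"
  shows "emeasure (HV p m) (residue_class p m c) = ennreal ((1 / real p ^ 1) ^ m)"
proof -
  have "emeasure (HV p m) (residue_class p m c) = of_nat (card (classv p m 1 c)) * ennreal ((1 / real p ^ 1) ^ m)"
  proof (rule count_lemma[OF p residue_sets])
    show "classv p m 1 c \<subseteq> PiE {..<m} (\<lambda>_. {0..<int p ^ 1})" by (auto simp: classv_def)
    fix x assume "x \<in> Zv p m"
    then show "x \<in> residue_class p m c \<longleftrightarrow> restrict (\<lambda>j. x j 1) {..<m} \<in> classv p m 1 c"
      by (rule residue_char[OF p le_refl])
  qed
  then show ?thesis using classv_1[OF p] by simp
qed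


lemma phiN_classv:
  assumes p: "p > 0" and N: "N \<ge> 1" and w: "w \<in> classv p 9 N c"
  shows "phiN p N w \<in> classv p 8 N (phi_poly c)"
proof -
  have pd: "int p dvd int p ^ N" using N by (simp add: dvd_power)
  have "[phi_poly (restrict w {..<9}) i = phi_poly (restrict c {..<9}) i] (mod int p)" for i
  proof (rule phi_poly_cong)
    fix j show "[restrict w {..<9} j = restrict c {..<9} j] (mod int p)"
      using w unfolding classv_def by (cases "j < 9") (auto simp: cong_def)
  qed
  then have "phi_poly w i mod int p = phi_poly c i mod int p" for i
    unfolding phi_poly_restrict cong_def .
  then show ?thesis using p pd unfolding classv_def phiN_def by (auto simp: PiE_iff mod_mod_cancel)
qed

lemma Phi_residue:
  assumes p: "p > 0" and x: "x \<in> residue_class p 9 c"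
  shows "Phi p x \<in> residue_class p 8 (phi_poly c)"
proof -
  have xZ: "x \<in> Zv p 9" using x unfolding residue_Zv by simp
  have "[phi_poly (restrict (\<lambda>j. x j 1) {..<9}) i = phi_poly (restrict c {..<9}) i] (mod int p)" for i
  proof (rule phi_poly_cong)
    fix j show "[restrict (\<lambda>j. x j 1) {..<9} j = restrict c {..<9} j] (mod int p)"
      using x unfolding residue_Zv by (cases "j < 9") (auto simp: cong_def)
  qed
  then have "phi_poly (\<lambda>j. x j 1) i mod int p = phi_poly c i mod int p" for i
    unfolding phi_poly_restrict cong_def .
  then show ?thesis using Phi_Zv[OF p xZ] unfolding residue_Zv by (auto simp: Phi_def)
qed

definition TT :: "nat \<Rightarrow> nat \<Rightarrow> (nat \<Rightarrow> int) \<Rightarrow> nat \<Rightarrow> (nat \<Rightarrow> nat \<Rightarrow> int) \<Rightarrow> (nat \<Rightarrow> int) set" where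
  "TT p m d n y = {z \<in> classv p m (Suc n) d. \<forall>j<m. \<forall>k<n. y j k = z j mod int p ^ k}"

lemma char_cyl:
  assumes p: "p > 0" and x: "x \<in> Zv p m"
  shows "x \<in> residue_class p m d \<inter> CylG m n y \<longleftrightarrow> restrict (\<lambda>j. x j (Suc n)) {..<m} \<in> TT p m d n y"
proof -
  have xz: "x j \<in> Zp p" if "j < m" for j using x that unfolding Zv_def by auto
  have "x \<in> CylG m n y \<longleftrightarrow> (\<forall>j<m. \<forall>k<n. y j k = x j (Suc n) mod int p ^ k)"
  proof -
    have "x \<in> CylG m n y \<longleftrightarrow> (\<forall>j<m. \<forall>k<n. x j k = y j k)"
      using x unfolding CylG_def Zv_def by (auto simp: PiE_iff)
    also have "\<dots> \<longleftrightarrow> (\<forall>j<m. \<forall>k<n. y j k = x j (Suc n) mod int p ^ k)"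
      using Zp_mod[OF xz] by (metis less_imp_le_nat le_SucI)
    finally show ?thesis .
  qed
  then show ?thesis using residue_char[OF p _ x, of "Suc n" d] unfolding TT_def by auto
qed


lemma ennreal_frac:
  assumes "0 \<le> a" "0 < b"
  shows "of_nat k * ennreal a / ennreal b = ennreal (real k * a / b)"
proof -
  have "of_nat k * ennreal a = ennreal (real k * a)"
    using assms by (simp add: ennreal_of_nat_eq_real_of_nat ennreal_mult)
  then show ?thesis using assms by (simp add: divide_ennreal)
qed

lemma main_general:
  assumes p: "p > 1" and linc: "\<And>e. card (Lin p c e) = p"
  shows "Phi p ` residue_class p 9 c \<subseteq> residue_class p 8 (phi_poly c)
    \<and> measure_preserving_map
        (uniform_measure (HV p 9) (residue_class p 9 c))
        (uniform_measure (HV p 8) (residue_class p 8 (phi_poly c)))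
        (Phi p)"
proof -
  have p0: "p > 0" using p by simp
  define R9 where "R9 = residue_class p 9 c"
  define R8 where "R8 = residue_class p 8 (phi_poly c)"
  define M9 where "M9 = uniform_measure (HV p 9) R9"
  define M8 where "M8 = uniform_measure (HV p 8) R8"
  have img: "Phi p ` R9 \<subseteq> R8" unfolding R9_def R8_def using Phi_residue[OF p0] by auto
  have R9s: "R9 \<in> sets (HV p 9)" and R8s: "R8 \<in> sets (HV p 8)" unfolding R9_def R8_def by (rule residue_sets)+
  have meas: "Phi p \<in> measurable M9 M8"
    unfolding M9_def M8_def using Phi_meas
    by (subst measurable_cong_sets[OF sets_uniform_measure sets_uniform_measure])
  have R9m: "emeasure (HV p 9) R9 = ennreal ((1 / real p ^ 1) ^ 9)" unfolding R9_def by (rule emeasure_residue[OF p0])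
  have R8m: "emeasure (HV p 8) R8 = ennreal ((1 / real p ^ 1) ^ 8)" unfolding R8_def by (rule emeasure_residue[OF p0])
  define rr where "rr n y = real (card (TT p 8 (phi_poly c) n y)) * (1 / real p ^ Suc n) ^ 8 / (1 / real p ^ 1) ^ 8"
    for n y
  have pos1: "0 < (1 / real p ^ 1) ^ m" for m using p0 by simp
  have nn: "0 \<le> (1 / real p ^ N) ^ m" for N m by simp
  have finTT: "finite (TT p 8 (phi_poly c) n y)" for n y
    unfolding TT_def by (rule finite_subset[OF _ finite_classv]) auto
  have TTsub: "TT p m d n y \<subseteq> PiE {..<m} (\<lambda>_. {0..<int p ^ Suc n})" for m d n y
    unfolding TT_def classv_def by auto
  have rhs: "emeasure M8 (CylG 8 n y) = ennreal (rr n y)" for n y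
  proof -
    have Xs: "CylG 8 n y \<in> sets (HV p 8)" by (rule CylG_sets)
    have "emeasure (HV p 8) (R8 \<inter> CylG 8 n y) = of_nat (card (TT p 8 (phi_poly c) n y)) * ennreal ((1 / real p ^ Suc n) ^ 8)"
      unfolding R8_def
      by (rule count_lemma[OF p0 _ TTsub char_cyl[OF p0]]) (use Xs residue_sets in auto)
    moreover have "emeasure M8 (CylG 8 n y) = emeasure (HV p 8) (R8 \<inter> CylG 8 n y) / emeasure (HV p 8) R8"
      unfolding M8_def using R8s Xs by simp
    ultimately have "emeasure M8 (CylG 8 n y) = of_nat (card (TT p 8 (phi_poly c) n y)) * ennreal ((1 / real p ^ Suc n) ^ 8) / ennreal ((1 / real p ^ 1) ^ 8)"
      using R8m by (simp only:)
    then show ?thesis unfolding rr_def using ennreal_frac[OF nn pos1] by (simp only:)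
  qed
  have lhs: "emeasure (distr M9 M8 (Phi p)) (CylG 8 n y) = ennreal (rr n y)" for n y
  proof -
    define T8 where "T8 = TT p 8 (phi_poly c) n y"
    define T9 where "T9 = {w \<in> classv p 9 (Suc n) c. phiN p (Suc n) w \<in> T8}"
    have Xs: "CylG 8 n y \<in> sets (HV p 8)" by (rule CylG_sets)
    have Xs8: "CylG 8 n y \<in> sets M8" using Xs unfolding M8_def by simp
    have S9s: "R9 \<inter> (Phi p -` CylG 8 n y \<inter> space (HV p 9)) \<in> sets (HV p 9)"
      using measurable_sets[OF Phi_meas Xs] R9s by auto
    have "emeasure (distr M9 M8 (Phi p)) (CylG 8 n y) = emeasure M9 (Phi p -` CylG 8 n y \<inter> space M9)"
      by (rule emeasure_distr[OF meas Xs8])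
    also have "\<dots> = emeasure (HV p 9) (R9 \<inter> (Phi p -` CylG 8 n y \<inter> space (HV p 9))) / emeasure (HV p 9) R9"
      unfolding M9_def using S9s R9s measurable_sets[OF Phi_meas Xs] by simp
    also have "emeasure (HV p 9) (R9 \<inter> (Phi p -` CylG 8 n y \<inter> space (HV p 9))) = of_nat (card T9) * ennreal ((1 / real p ^ Suc n) ^ 9)"
    proof (rule count_lemma[OF p0 S9s])
      show "T9 \<subseteq> PiE {..<9} (\<lambda>_. {0..<int p ^ Suc n})" unfolding T9_def classv_def by auto
      fix x assume xZ: "x \<in> Zv p 9"
      define w where "w = restrict (\<lambda>j. x j (Suc n)) {..<9}"
      have xsp: "x \<in> space (HV p 9)" using xZ unfolding Zv_def space_HV by (auto simp: PiE_iff)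
      have "x \<in> R9 \<longleftrightarrow> w \<in> classv p 9 (Suc n) c" unfolding R9_def w_def by (rule residue_char[OF p0 _ xZ]) simp
      moreover have "Phi p x \<in> CylG 8 n y \<longleftrightarrow> phiN p (Suc n) w \<in> T8" if "x \<in> R9"
      proof -
        have "Phi p x \<in> R8" using img that by auto
        then have "Phi p x \<in> CylG 8 n y \<longleftrightarrow> Phi p x \<in> R8 \<inter> CylG 8 n y" by auto
        also have "\<dots> \<longleftrightarrow> restrict (\<lambda>i. Phi p x i (Suc n)) {..<8} \<in> T8"
          unfolding R8_def T8_def by (rule char_cyl[OF p0 Phi_Zv[OF p0 xZ]])
        also have "\<dots> \<longleftrightarrow> phiN p (Suc n) w \<in> T8" unfolding w_def Phi_level ..
        finally show ?thesis .
      qed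
      ultimately show "x \<in> R9 \<inter> (Phi p -` CylG 8 n y \<inter> space (HV p 9)) \<longleftrightarrow> w \<in> T9"
        unfolding T9_def using xsp by blast
    qed
    also have "card T9 = card T8 * p ^ n"
    proof -
      have "T9 = (\<Union>z\<in>T8. fiber p (Suc n) c z)" unfolding T9_def fiber_def by auto
      moreover have "card (\<Union>z\<in>T8. fiber p (Suc n) c z) = (\<Sum>z\<in>T8. card (fiber p (Suc n) c z))"
      proof (rule card_UN_disjoint)
        show "finite T8" unfolding T8_def by (rule finTT)
        show "\<forall>z\<in>T8. finite (fiber p (Suc n) c z)" unfolding fiber_def using finite_classv by auto
        show "\<forall>z\<in>T8. \<forall>z'\<in>T8. z \<noteq> z' \<longrightarrow> fiber p (Suc n) c z \<inter> fiber p (Suc n) c z' = {}"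
          unfolding fiber_def by auto
      qed
      moreover have "card (fiber p (Suc n) c z) = p ^ n" if "z \<in> T8" for z
        using that unfolding T8_def TT_def by (intro fiber_card[OF p linc]) auto
      ultimately show ?thesis by simp
    qed
    finally have "emeasure (distr M9 M8 (Phi p)) (CylG 8 n y) =
        of_nat (card T8 * p ^ n) * ennreal ((1 / real p ^ Suc n) ^ 9) / ennreal ((1 / real p ^ 1) ^ 9)"
      using R9m by simp
    also have "\<dots> = ennreal (real (card T8 * p ^ n) * (1 / real p ^ Suc n) ^ 9 / (1 / real p ^ 1) ^ 9)"
      by (rule ennreal_frac[OF nn pos1])
    also have "real (card T8 * p ^ n) * (1 / real p ^ Suc n) ^ 9 / (1 / real p ^ 1) ^ 9 = rr n y"
    proof -
      have "real (card T8 * p ^ n) * (1 / real p ^ Suc n) ^ 9 / (1 / real p ^ 1) ^ 9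
          = real (card T8) * real p ^ n * (1 / (real p ^ n * real p)) ^ 9 / (1 / real p) ^ 9"
        by (simp add: mult.commute)
      also have "\<dots> = real (card T8) * (1 / (real p ^ n * real p)) ^ 8 / (1 / real p) ^ 8"
        by (rule real_arith_final) (use p0 in auto)
      also have "\<dots> = rr n y" unfolding rr_def T8_def by (simp add: mult.commute)
      finally show ?thesis .
    qed
    finally show ?thesis .
  qed
  have "distr M9 M8 (Phi p) = M8"
  proof (rule measure_eqI_generator_eq[where \<Omega> = "PiE {..<8} (\<lambda>_. UNIV)" and E = "EG 8"
        and A = "\<lambda>_. CylG 8 0 (\<lambda>_ _. 0)"])
    show "Int_stable (EG 8)" by (rule EG_Int_stable)
    show "EG 8 \<subseteq> Pow (PiE {..<8} (\<lambda>_. UNIV))" by (rule EG_Pow)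
    fix X assume "X \<in> EG 8"
    then consider "X = {}" | n y where "X = CylG 8 n y" unfolding EG_def by auto
    then show "emeasure (distr M9 M8 (Phi p)) X = emeasure M8 X"
    proof cases
      case 1 then show ?thesis by simp
    next
      case 2 then show ?thesis using lhs rhs by simp
    qed
  next
    show "sets (distr M9 M8 (Phi p)) = sigma_sets (PiE {..<8} (\<lambda>_. UNIV)) (EG 8)"
      unfolding M8_def using sets_HV_sigma by simp
    show "sets M8 = sigma_sets (PiE {..<8} (\<lambda>_. UNIV)) (EG 8)"
      unfolding M8_def using sets_HV_sigma by simp
    show "range (\<lambda>_. CylG 8 0 (\<lambda>_ _. 0)) \<subseteq> EG 8" unfolding EG_def by auto
    show "(\<Union>i::nat. CylG 8 0 (\<lambda>_ _. 0)) = PiE {..<8} (\<lambda>_. UNIV)" by (simp add: CylG_0)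
    fix i :: nat
    show "emeasure (distr M9 M8 (Phi p)) (CylG 8 0 (\<lambda>_ _. 0)) \<noteq> \<infinity>" using lhs by simp
  qed
  then show ?thesis using img meas unfolding measure_preserving_map_def M9_def M8_def R9_def R8_def
    by simp
qed

theorem lemma5p3:
  fixes p :: nat and Fbar :: "nat \<Rightarrow> int"
  assumes "prime p"
    and "(\<exists>a b c. irreducible_bqf_mod p a b c \<and> Fbar = Fbar_i a b c) \<or> Fbar = Fbar_ii"
  shows "Phi p ` residue_class p 9 Fbar \<subseteq> residue_class p 8 (phi_poly Fbar)
    \<and> measure_preserving_map
        (uniform_measure (haar_Zp_vec p 9) (residue_class p 9 Fbar))
        (uniform_measure (haar_Zp_vec p 8) (residue_class p 8 (phi_poly Fbar)))
        (Phi p)"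
proof -
  have p: "p > 1" using assms(1) by (rule prime_gt_1_nat)
  have linc: "card (Lin p Fbar e) = p" for e
    using assms(2)
  proof
    assume "\<exists>a b c. irreducible_bqf_mod p a b c \<and> Fbar = Fbar_i a b c"
    then obtain a b c where irr: "irreducible_bqf_mod p a b c" and F: "Fbar = Fbar_i a b c" by blast
    obtain v where v: "[c * v = 1] (mod int p)" using irred_inv[OF assms(1) irr] by blast
    show ?thesis unfolding F by (rule Lin_i_card[OF p v])
  next
    assume F: "Fbar = Fbar_ii"
    show ?thesis unfolding F by (rule Lin_ii_card[OF p])
  qed
  show ?thesis by (rule main_general[OF p linc])
qed

end
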